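(* Let $S \subset \mathbb{Z}^2$ be a digital convex set of $n$ lattice points, i.e. $\operatorname{conv}(S) \cap \mathbb{Z}^2 = S$. Then the QuickHull algorithm (described in the context) computes the convex hull of $S$ using $O(n)$ time and $O(n)$ space.
   Context: $\operatorname{conv}(S)$ denotes the convex hull of $S$. A set $S\subset\mathbb{Z}^d$ is digital convex if $\operatorname{conv}(S)\cap\mathbb{Z}^d=S$. The QuickHull algorithm on a finite planar point set $S$: it first computes the top-most and bottom-most points of $S$, then the two extreme points of $S$ in the directions normal to the line through these two points; these (up to) four points form a convex polygon called the partial hull, and points of $S$ lying in the partial hull are discarded. Then, repeatedly, for every edge $ab$ of the current partial hull whose points have not all been resolved, with outward normal $v$, the algorithm finds among the remaining (non-discarded) points associated to that edge the points extreme in direction $v$ (farthest from the line $ab$ on the outer side). If no remaining point lies strictly outside the edge, the edge is an edge of the convex hull. Otherwise the farthest point(s) are inserted as vertices of the partial hull between $a$ and $b$ (when several points are equally farthest, they all lie on the hull, and the first and last of them are inserted), and all points now lying in the enlarged partial hull (including points on its boundary edges) are discarded. One round of this processing over all edges of the current partial hull is a step. The algorithm ends when no point remains, yielding $\operatorname{conv}(S)$. *)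

theory Defs
  imports "HOL-Analysis.Analysis"
begin

type_synonym pt = "int \<times> int"

definition rpt :: "pt \<Rightarrow> real \<times> real" where
  "rpt p = (real_of_int (fst p), real_of_int (snd p))"

definition digital_convex :: "pt set \<Rightarrow> bool" where
  "digital_convex S \<longleftrightarrow> convex hull (rpt ` S) \<inter> range rpt = rpt ` S"

definition cross :: "pt \<Rightarrow> pt \<Rightarrow> int" where
  "cross u v = fst u * snd v - snd u * fst v"

definition dotp :: "pt \<Rightarrow> pt \<Rightarrow> int" where
  "dotp u v = fst u * fst v + snd u * snd v"

text \<open>Signed (scaled) distance of p from the directed line a->b; positive iff p lies
  strictly to the right of a->b, i.e. strictly outside the edge ab of a
  counterclockwise polygon.\<close>
definition outd :: "pt \<Rightarrow> pt \<Rightarrow> pt \<Rightarrow> int" where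
  "outd a b p = cross (p - a) (b - a)"

definition right_of :: "pt \<Rightarrow> pt \<Rightarrow> pt set \<Rightarrow> pt set" where
  "right_of a b P = {p \<in> P. outd a b p > 0}"

text \<open>An edge of the partial hull: endpoints (a, b) (counterclockwise order) together with
  the set of remaining (non-discarded) points associated to it, i.e. lying strictly outside it.
  The edge is resolved iff its point set is empty.\<close>
type_synonym edge = "pt \<times> pt \<times> pt set"

definition top_pt :: "pt set \<Rightarrow> pt" where
  "top_pt S = (THE t. t \<in> S \<and> (\<forall>p\<in>S. snd p < snd t \<or> (snd p = snd t \<and> fst p \<le> fst t)))"

definition bot_pt :: "pt set \<Rightarrow> pt" where
  "bot_pt S = (THE t. t \<in> S \<and> (\<forall>p\<in>S. snd t < snd p \<or> (snd p = snd t \<and> fst t \<le> fst p)))"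

definition farthest :: "pt \<Rightarrow> pt \<Rightarrow> pt set \<Rightarrow> pt set" where
  "farthest a b P = {p \<in> P. outd a b p = Max (outd a b ` P)}"

definition extreme_pt :: "pt \<Rightarrow> pt \<Rightarrow> pt set \<Rightarrow> pt" where
  "extreme_pt a b S = (SOME p. p \<in> farthest a b S)"

definition qh_init_edges :: "pt \<Rightarrow> pt \<Rightarrow> pt set \<Rightarrow> edge list" where
  "qh_init_edges a b S =
     (if right_of a b S = {} then [(a, b, {})]
      else (let l = extreme_pt a b S in [(a, l, right_of a l S), (l, b, right_of l b S)]))"

text \<open>Initial partial hull (counterclockwise: t, left extreme, b, right extreme).\<close>
definition qh_init :: "pt set \<Rightarrow> edge list" where
  "qh_init S = (let t = top_pt S; b = bot_pt S in
     if t = b then [(t, t, {})] else qh_init_edges t b S @ qh_init_edges b t S)"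

definition first_along :: "pt \<Rightarrow> pt \<Rightarrow> pt set \<Rightarrow> pt" where
  "first_along a b F = (THE f. f \<in> F \<and> (\<forall>q\<in>F. dotp (b - a) f \<le> dotp (b - a) q))"

definition last_along :: "pt \<Rightarrow> pt \<Rightarrow> pt set \<Rightarrow> pt" where
  "last_along a b F = (THE f. f \<in> F \<and> (\<forall>q\<in>F. dotp (b - a) q \<le> dotp (b - a) f))"

definition process_edge :: "edge \<Rightarrow> edge list" where
  "process_edge e = (case e of (a, b, P) \<Rightarrow>
     if P = {} then [(a, b, P)]
     else (let F = farthest a b P; f1 = first_along a b F; f2 = last_along a b F in
       if f1 = f2 then [(a, f1, right_of a f1 P), (f1, b, right_of f1 b P)]
       else [(a, f1, right_of a f1 P), (f1, f2, right_of f1 f2 P), (f2, b, right_of f2 b P)]))"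

definition qh_step :: "edge list \<Rightarrow> edge list" where
  "qh_step es = concat (map process_edge es)"

definition step_cost :: "edge list \<Rightarrow> nat" where
  "step_cost es = sum_list (map (\<lambda>(a, b, P). if P = {} then 0 else card P + 1) es)"

definition qh_time :: "pt set \<Rightarrow> nat \<Rightarrow> nat" where
  "qh_time S N = card S + (\<Sum>k<N. step_cost ((qh_step ^^ k) (qh_init S)))"

definition qh_space :: "edge list \<Rightarrow> nat" where
  "qh_space es = length es + sum_list (map (\<lambda>(a, b, P). card P) es)"

definition qh_finished :: "edge list \<Rightarrow> bool" where
  "qh_finished es \<longleftrightarrow> (\<forall>(a, b, P) \<in> set es. P = {})"

definition qh_vertices :: "edge list \<Rightarrow> pt set" where
  "qh_vertices es = fst ` set es"

end

theory Submission
  imports Defs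
begin


definition rcross :: "real \<times> real \<Rightarrow> real \<times> real \<Rightarrow> real" where
  "rcross u v = fst u * snd v - snd u * fst v"

definition intri :: "real \<times> real \<Rightarrow> real \<times> real \<Rightarrow> real \<times> real \<Rightarrow> real \<times> real \<Rightarrow> bool" where
  "intri A B C p \<longleftrightarrow> (\<exists>u v. 0 \<le> u \<and> 0 \<le> v \<and> u + v \<le> 1 \<and> p = A + u *\<^sub>R (B - A) + v *\<^sub>R (C - A))"

lemma intri_hull: "intri A B C p \<longleftrightarrow> p \<in> convex hull {A, B, C}"
  unfolding intri_def convex_hull_3_alt by blast

lemma intri_I:
  assumes "0 \<le> u" "0 \<le> v" "u + v \<le> 1"
    "fst p = fst A + u * (fst B - fst A) + v * (fst C - fst A)"
    "snd p = snd A + u * (snd B - snd A) + v * (snd C - snd A)"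
  shows "intri A B C p"
  unfolding intri_def using assms by (intro exI[of _ u] exI[of _ v]) (auto simp: prod_eq_iff)

lemma intri_E:
  assumes "intri A B C p"
  obtains u v where "0 \<le> u" "0 \<le> v" "u + v \<le> 1"
    "fst p = fst A + u * (fst B - fst A) + v * (fst C - fst A)"
    "snd p = snd A + u * (snd B - snd A) + v * (snd C - snd A)"
  using assms unfolding intri_def by (auto simp: prod_eq_iff)

lemma rcross_rpt: "rcross (rpt p - rpt q) (rpt r - rpt s) = of_int (cross (p - q) (r - s))"
  by (simp add: rcross_def rpt_def cross_def)

lemma rpt_inj: "rpt p = rpt q \<longleftrightarrow> p = q"
  by (auto simp: rpt_def prod_eq_iff)

lemma outd_expand: "outd a b p = (fst p - fst a) * (snd b - snd a) - (snd p - snd a) * (fst b - fst a)"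
  by (simp add: outd_def cross_def)

lemma solve_lin: fixes H x a U V p q :: real
  assumes "H \<noteq> 0" "H * (x - a) = U * p + V * q"
  shows "x = a + U / H * p + V / H * q"
  using assms by (simp add: field_simps)

lemma L1:
  fixes A B C X p :: "real \<times> real"
  assumes D: "rcross (C - A) (B - A) > 0"
    and X: "intri A B C X" and hX: "rcross (X - A) (B - A) = h" and h: "h > 0"
    and p: "intri A B C p" and pl: "rcross (p - A) (B - A) \<le> h"
    and pr: "rcross (p - A) (X - A) > 0"
  shows "intri A X (A + (h / rcross (C - A) (B - A)) *\<^sub>R (C - A)) p"
proof -
  define D0 where "D0 = rcross (C - A) (B - A)"
  obtain ux vx where x: "0 \<le> ux" "0 \<le> vx" "ux + vx \<le> 1"
    "fst X = fst A + ux * (fst B - fst A) + vx * (fst C - fst A)"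
    "snd X = snd A + ux * (snd B - snd A) + vx * (snd C - snd A)"
    using intri_E[OF X] by blast
  obtain up vp where q: "0 \<le> up" "0 \<le> vp" "up + vp \<le> 1"
    "fst p = fst A + up * (fst B - fst A) + vp * (fst C - fst A)"
    "snd p = snd A + up * (snd B - snd A) + vp * (snd C - snd A)"
    using intri_E[OF p] by blast
  have e1: "rcross (X - A) (B - A) = vx * D0"
    unfolding D0_def rcross_def by (simp add: x(4,5) algebra_simps)
  have e2: "rcross (p - A) (B - A) = vp * D0"
    unfolding D0_def rcross_def by (simp add: q(4,5) algebra_simps)
  have e3: "rcross (p - A) (X - A) = (vp * ux - up * vx) * D0"
    unfolding D0_def rcross_def by (simp add: q(4,5) x(4,5) algebra_simps)
  have D0: "D0 > 0" using D D0_def by simp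
  have vxh: "vx = h / D0" using e1 hX D0 by (simp add: field_simps)
  have vxpos: "vx > 0" using vxh h D0 by simp
  have vple: "vp \<le> vx" using e2 pl e1 hX D0 by (metis mult_right_le_imp_le)
  have key: "vp * ux > up * vx" using e3 pr D0 by (simp add: zero_less_mult_iff)
  have uxpos: "ux > 0"
  proof (rule ccontr)
    assume "\<not> ux > 0" then have "ux = 0" using x(1) by simp
    then have "up * vx < 0" using key by simp
    moreover have "up * vx \<ge> 0" using q(1) vxpos by simp
    ultimately show False by simp
  qed
  define u where "u = up / ux"
  define v where "v = vp / vx - up / ux"
  have u0: "0 \<le> u" unfolding u_def using q(1) uxpos by simp
  have v0: "0 \<le> v" unfolding v_def using key uxpos vxpos
    by (simp add: field_simps)
  have uv: "u + v \<le> 1" unfolding u_def v_def using vple vxpos by simp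
  show ?thesis
  proof (rule intri_I[OF u0 v0 uv])
    show "fst p = fst A + u * (fst X - fst A) + v * (fst (A + (h / rcross (C - A) (B - A)) *\<^sub>R (C - A)) - fst A)"
      unfolding D0_def[symmetric] vxh[symmetric] using uxpos vxpos
      by (simp add: q(4) x(4) u_def v_def field_simps)
    show "snd p = snd A + u * (snd X - snd A) + v * (snd (A + (h / rcross (C - A) (B - A)) *\<^sub>R (C - A)) - snd A)"
      unfolding D0_def[symmetric] vxh[symmetric] using uxpos vxpos
      by (simp add: q(5) x(5) u_def v_def field_simps)
  qed
qed

lemma L2:
  fixes A B C X p :: "real \<times> real"
  assumes D: "rcross (C - A) (B - A) > 0"
    and X: "intri A B C X" and hX: "rcross (X - A) (B - A) = h" and h: "h > 0"
    and p: "intri A X (A + (h / rcross (C - A) (B - A)) *\<^sub>R (C - A)) p"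
    and pr: "rcross (p - A) (X - A) > 0"
  shows "intri A B C p \<and> rcross (p - A) (B - A) > 0"
proof -
  define D0 where "D0 = rcross (C - A) (B - A)"
  obtain ux vx where x: "0 \<le> ux" "0 \<le> vx" "ux + vx \<le> 1"
    "fst X = fst A + ux * (fst B - fst A) + vx * (fst C - fst A)"
    "snd X = snd A + ux * (snd B - snd A) + vx * (snd C - snd A)"
    using intri_E[OF X] by blast
  have D0: "D0 > 0" using D D0_def by simp
  have e1: "rcross (X - A) (B - A) = vx * D0"
    unfolding D0_def rcross_def by (simp add: x(4,5) algebra_simps)
  have vxh: "h / D0 = vx" using e1 hX D0 by (simp add: field_simps)
  obtain m n where q: "0 \<le> m" "0 \<le> n" "m + n \<le> 1"
    "fst p = fst A + m * (fst X - fst A) + n * (vx * (fst C - fst A))"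
    "snd p = snd A + m * (snd X - snd A) + n * (vx * (snd C - snd A))"
    using intri_E[OF p] unfolding D0_def[symmetric] vxh by auto
  have e3: "rcross (p - A) (X - A) = n * vx * ux * D0"
    unfolding D0_def rcross_def by (simp add: q(4,5) x(4,5) algebra_simps)
  have npos: "n > 0" using e3 pr q(2) x(1,2) D0
    by (metis less_eq_real_def mult_eq_0_iff order_less_irrefl)
  have vxpos: "vx > 0" using e3 pr q(2) x(1,2) D0
    by (metis less_eq_real_def mult_eq_0_iff mult_zero_right order_less_irrefl)
  define u where "u = m * ux"
  define v where "v = (m + n) * vx"
  have u0: "0 \<le> u" unfolding u_def using q(1) x(1) by simp
  have v0: "0 \<le> v" unfolding v_def using q(1,2) x(2) by simp
  have "m * (ux + vx) \<le> m" using q(1) x(3) by (simp add: mult_left_le)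
  moreover have "n * vx \<le> n" using q(2) x(1,3) by (simp add: mult_left_le)
  ultimately have uv: "u + v \<le> 1" unfolding u_def v_def using q(3) by (simp add: algebra_simps)
  have "intri A B C p"
    by (rule intri_I[OF u0 v0 uv]) (simp_all add: q(4,5) x(4,5) u_def v_def algebra_simps)
  moreover have "rcross (p - A) (B - A) = v * D0"
    unfolding D0_def rcross_def v_def by (simp add: q(4,5) x(4,5) algebra_simps)
  moreover have "v > 0" unfolding v_def using npos q(1) vxpos by simp
  ultimately show ?thesis using D0 by simp
qed

lemma intri_trans:
  assumes "intri A B X p" "intri A B C X"
  shows "intri A B C p"
proof -
  obtain ux vx where x: "0 \<le> ux" "0 \<le> vx" "ux + vx \<le> 1"
    "fst X = fst A + ux * (fst B - fst A) + vx * (fst C - fst A)"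
    "snd X = snd A + ux * (snd B - snd A) + vx * (snd C - snd A)"
    using intri_E[OF assms(2)] by blast
  obtain up vp where q: "0 \<le> up" "0 \<le> vp" "up + vp \<le> 1"
    "fst p = fst A + up * (fst B - fst A) + vp * (fst X - fst A)"
    "snd p = snd A + up * (snd B - snd A) + vp * (snd X - snd A)"
    using intri_E[OF assms(1)] by blast
  have "vp * (ux + vx) \<le> vp" using q(2) x(3) by (simp add: mult_left_le)
  then have s: "(up + vp * ux) + vp * vx \<le> 1" using q(3) by (simp add: algebra_simps)
  show ?thesis
    by (rule intri_I[OF _ _ s]) (use q x in \<open>simp_all add: q(4,5) x(4,5) algebra_simps\<close>)
qed

lemma intri_A: "intri A B C A" by (rule intri_I[of 0 0]) auto
lemma intri_B: "intri A B C B" by (rule intri_I[of 1 0]) auto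
lemma intri_C: "intri A B C C" by (rule intri_I[of 0 1]) auto

lemma cramer_fst:
  "cross (f - a) (b - a) * (fst p - fst a) = cross (f - a) (p - a) * (fst b - fst a) + cross (p - a) (b - a) * (fst f - fst a)"
  by (simp add: cross_def algebra_simps)
lemma cramer_snd:
  "cross (f - a) (b - a) * (snd p - snd a) = cross (f - a) (p - a) * (snd b - snd a) + cross (p - a) (b - a) * (snd f - snd a)"
  by (simp add: cross_def algebra_simps)

lemma outd_fb: "outd f b p = cross (f - a) (p - a) + outd a b p - outd a b f"
  by (simp add: outd_def cross_def algebra_simps)

lemma intri_lattice:
  assumes h: "cross (f - a) (b - a) > 0"
    and U: "cross (f - a) (p - a) \<ge> 0" and V: "cross (p - a) (b - a) \<ge> 0"
    and UV: "cross (f - a) (p - a) + cross (p - a) (b - a) \<le> cross (f - a) (b - a)"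
  shows "intri (rpt a) (rpt b) (rpt f) (rpt p)"
proof -
  define H where "H = cross (f - a) (b - a)"
  define U where "U = cross (f - a) (p - a)"
  define V where "V = cross (p - a) (b - a)"
  have c1: "real_of_int H * (real_of_int (fst p) - real_of_int (fst a)) = real_of_int U * (real_of_int (fst b) - real_of_int (fst a)) + real_of_int V * (real_of_int (fst f) - real_of_int (fst a))"
  proof -
    have "H * (fst p - fst a) = U * (fst b - fst a) + V * (fst f - fst a)"
      unfolding H_def U_def V_def by (rule cramer_fst)
    from arg_cong[OF this, of real_of_int] show ?thesis by simp
  qed
  have c2: "real_of_int H * (real_of_int (snd p) - real_of_int (snd a)) = real_of_int U * (real_of_int (snd b) - real_of_int (snd a)) + real_of_int V * (real_of_int (snd f) - real_of_int (snd a))"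
  proof -
    have "H * (snd p - snd a) = U * (snd b - snd a) + V * (snd f - snd a)"
      unfolding H_def U_def V_def by (rule cramer_snd)
    from arg_cong[OF this, of real_of_int] show ?thesis by simp
  qed
  have Hp: "real_of_int H > 0" using h H_def by simp
  then have Hn: "real_of_int H \<noteq> 0" by simp
  have f1: "real_of_int (fst p) = real_of_int (fst a) + real_of_int U / real_of_int H * (real_of_int (fst b) - real_of_int (fst a)) + real_of_int V / real_of_int H * (real_of_int (fst f) - real_of_int (fst a))"
    by (rule solve_lin[OF Hn c1])
  have f2: "real_of_int (snd p) = real_of_int (snd a) + real_of_int U / real_of_int H * (real_of_int (snd b) - real_of_int (snd a)) + real_of_int V / real_of_int H * (real_of_int (snd f) - real_of_int (snd a))"
    by (rule solve_lin[OF Hn c2])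
  have s1: "0 \<le> real_of_int U / real_of_int H" using U Hp U_def by simp
  have s2: "0 \<le> real_of_int V / real_of_int H" using V Hp V_def by simp
  have "real_of_int U + real_of_int V \<le> real_of_int H" using UV unfolding U_def V_def H_def by linarith
  then have s3: "real_of_int U / real_of_int H + real_of_int V / real_of_int H \<le> 1"
    using Hp by (simp add: add_divide_distrib[symmetric])
  show ?thesis
    by (rule intri_I[OF s1 s2 s3]) (simp_all only: rpt_def fst_conv snd_conv f1 f2)
qed

lemma disc_tri:
  assumes h: "outd a b f > 0" and p1: "outd a b p \<ge> 0" and p2: "outd a f p \<le> 0" and p3: "outd f b p \<le> 0"
  shows "intri (rpt a) (rpt b) (rpt f) (rpt p)"
proof (rule intri_lattice)
  show "cross (f - a) (b - a) > 0" using h by (simp add: outd_def)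
  show "cross (f - a) (p - a) \<ge> 0" using p2 by (simp add: outd_def cross_def algebra_simps)
  show "cross (p - a) (b - a) \<ge> 0" using p1 by (simp add: outd_def)
  show "cross (f - a) (p - a) + cross (p - a) (b - a) \<le> cross (f - a) (b - a)"
    using p3 outd_fb[of f b p a] by (simp add: outd_def)
qed

lemma L3:
  fixes A B C X p :: "real \<times> real"
  assumes D: "rcross (C - A) (B - A) > 0"
    and X: "intri A B C X" and hX: "rcross (X - A) (B - A) = h" and h: "h > 0"
    and p: "intri A B C p" and pl: "rcross (p - A) (B - A) \<le> h"
    and pr: "rcross (p - X) (B - X) > 0"
  shows "intri X B (B + (h / rcross (C - A) (B - A)) *\<^sub>R (C - B)) p"
proof -
  define D0 where "D0 = rcross (C - A) (B - A)"
  obtain ux vx where x: "0 \<le> ux" "0 \<le> vx" "ux + vx \<le> 1"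
    "fst X = fst A + ux * (fst B - fst A) + vx * (fst C - fst A)"
    "snd X = snd A + ux * (snd B - snd A) + vx * (snd C - snd A)"
    using intri_E[OF X] by blast
  obtain up vp where q: "0 \<le> up" "0 \<le> vp" "up + vp \<le> 1"
    "fst p = fst A + up * (fst B - fst A) + vp * (fst C - fst A)"
    "snd p = snd A + up * (snd B - snd A) + vp * (snd C - snd A)"
    using intri_E[OF p] by blast
  have D0: "D0 > 0" using D D0_def by simp
  have e1: "rcross (X - A) (B - A) = vx * D0"
    unfolding D0_def rcross_def by (simp add: x(4,5) algebra_simps)
  have e2: "rcross (p - A) (B - A) = vp * D0"
    unfolding D0_def rcross_def by (simp add: q(4,5) algebra_simps)
  define K where "K = (up - ux) * vx + (vp - vx) * (1 - ux)"
  have e3: "rcross (p - X) (B - X) = K * D0"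
    unfolding D0_def rcross_def K_def by (simp add: q(4,5) x(4,5) algebra_simps)
  have vxh: "h / D0 = vx" using e1 hX D0 by (simp add: field_simps)
  have vxpos: "vx > 0" using vxh h D0 by (metis divide_pos_pos)
  have vple: "vp \<le> vx" using e2 pl e1 hX D0 by (metis mult_right_le_imp_le)
  have Kpos: "K > 0" using e3 pr D0 by (simp add: zero_less_mult_iff)
  define w where "w = 1 - ux - vx"
  have w0: "w \<ge> 0" using x(3) w_def by simp
  have Kw: "K \<le> vp * w"
  proof -
    have "K - vp * w = vx * (up + vp - 1)" unfolding K_def w_def by (simp add: algebra_simps)
    moreover have "vx * (up + vp - 1) \<le> 0" using vxpos q(3) by (simp add: mult_nonneg_nonpos)
    ultimately show ?thesis by simp
  qed
  have wpos: "w > 0" using Kw Kpos q(2) w0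
    by (metis less_eq_real_def mult_zero_right not_less)
  define m where "m = 1 - vp / vx"
  define n where "n = K / (vx * w)"
  have m0: "0 \<le> m" unfolding m_def using vple vxpos by simp
  have n0: "0 \<le> n" unfolding n_def using Kpos vxpos wpos by simp
  have "n \<le> vp / vx" unfolding n_def using Kw vxpos wpos by (simp add: field_simps)
  then have mn: "m + n \<le> 1" unfolding m_def by simp
  have vxne: "vx \<noteq> 0" and wne: "w \<noteq> 0" using vxpos wpos by auto
  have nw: "n * w = K / vx" using wne by (simp add: n_def)
  have cb: "ux + m * (1 - ux) + n * w = up"
    unfolding nw m_def K_def using vxne by (simp add: field_simps)
  have cc: "vx * (1 - m) = vp" unfolding m_def using vxne by (simp add: field_simps)
  have gen: "\<And>xa xb xc xp xx :: real. xx = xa + ux * (xb - xa) + vx * (xc - xa) \<Longrightarrow>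
      xp = xa + up * (xb - xa) + vp * (xc - xa) \<Longrightarrow>
      xp = xx + m * (xb - xx) + n * ((xb + vx * (xc - xb)) - xx)"
  proof -
    fix xa xb xc xp xx :: real
    assume h1: "xx = xa + ux * (xb - xa) + vx * (xc - xa)" and h2: "xp = xa + up * (xb - xa) + vp * (xc - xa)"
    have "xx + m * (xb - xx) + n * ((xb + vx * (xc - xb)) - xx) =
        xa + (ux + m * (1 - ux) + n * w) * (xb - xa) + (vx * (1 - m)) * (xc - xa)"
      unfolding h1 w_def by (simp add: algebra_simps)
    also have "\<dots> = xp" unfolding cb cc h2 by simp
    finally show "xp = xx + m * (xb - xx) + n * ((xb + vx * (xc - xb)) - xx)" by simp
  qed
  have "p = X + m *\<^sub>R (B - X) + n *\<^sub>R ((B + vx *\<^sub>R (C - B)) - X)"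
    using gen[OF x(4) q(4)] gen[OF x(5) q(5)] by (simp only: prod_eq_iff fst_add fst_scaleR fst_diff snd_add snd_scaleR snd_diff real_scaleR_def)
  then show ?thesis
    unfolding D0_def[symmetric] vxh intri_def using m0 n0 mn by blast
qed


lemma L4:
  fixes A B C X p :: "real \<times> real"
  assumes D: "rcross (C - A) (B - A) > 0"
    and X: "intri A B C X" and hX: "rcross (X - A) (B - A) = h" and h: "h > 0"
    and p: "intri X B (B + (h / rcross (C - A) (B - A)) *\<^sub>R (C - B)) p"
    and pr: "rcross (p - X) (B - X) > 0"
  shows "intri A B C p \<and> rcross (p - A) (B - A) > 0"
proof -
  define D0 where "D0 = rcross (C - A) (B - A)"
  obtain ux vx where x: "0 \<le> ux" "0 \<le> vx" "ux + vx \<le> 1"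
    "fst X = fst A + ux * (fst B - fst A) + vx * (fst C - fst A)"
    "snd X = snd A + ux * (snd B - snd A) + vx * (snd C - snd A)"
    using intri_E[OF X] by blast
  have D0: "D0 > 0" using D D0_def by simp
  have e1: "rcross (X - A) (B - A) = vx * D0"
    unfolding D0_def rcross_def by (simp add: x(4,5) algebra_simps)
  have vxh: "h / D0 = vx" using e1 hX D0 by (simp add: field_simps)
  obtain m n where q: "0 \<le> m" "0 \<le> n" "m + n \<le> 1"
    "fst p = fst X + m * (fst B - fst X) + n * (vx * (fst C - fst B) + fst B - fst X)"
    "snd p = snd X + m * (snd B - snd X) + n * (vx * (snd C - snd B) + snd B - snd X)"
    using intri_E[OF p] unfolding D0_def[symmetric] vxh by (auto simp: algebra_simps)
  define w where "w = 1 - ux - vx"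
  have w0: "w \<ge> 0" using x(3) w_def by simp
  have e3: "rcross (p - X) (B - X) = n * w * vx * D0"
    unfolding D0_def rcross_def w_def by (simp add: q(4,5) x(4,5) algebra_simps)
  have npos: "n > 0" using e3 pr q(2) x(2) w0 D0
    by (metis less_eq_real_def mult_eq_0_iff order_less_irrefl)
  have vxpos: "vx > 0" using e3 pr q(2) x(2) w0 D0
    by (metis less_eq_real_def mult_eq_0_iff mult_zero_right order_less_irrefl)
  define u where "u = ux + m * (1 - ux) + n * w"
  define v where "v = vx * (1 - m)"
  have "m * (1 - ux) \<ge> 0" using q(1) x(2,3) by simp
  moreover have "n * w \<ge> 0" using q(2) w0 by simp
  ultimately have u0: "0 \<le> u" unfolding u_def using x(1) by linarith
  have v0: "0 \<le> v" unfolding v_def using q(1,2,3) x(2) by simp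
  have "u + v = ux + vx + (m + n) * w" unfolding u_def v_def w_def by (simp add: algebra_simps)
  moreover have "(m + n) * w \<le> w" by (rule mult_left_le_one_le) (use q w0 in auto)
  ultimately have uv: "u + v \<le> 1" unfolding w_def by simp
  have "intri A B C p"
    by (rule intri_I[OF u0 v0 uv]) (simp_all add: q(4,5) x(4,5) u_def v_def w_def algebra_simps)
  moreover have "rcross (p - A) (B - A) = v * D0"
    unfolding D0_def rcross_def v_def by (simp add: q(4,5) x(4,5) algebra_simps)
  moreover have "1 - m > 0" using npos q(3) by linarith
  then have "v > 0" unfolding v_def using vxpos by (rule mult_pos_pos[rotated])
  ultimately show ?thesis using D0 by (simp add: mult_pos_pos)
qed


lemma count_low:
  fixes P :: "pt set" and a b :: pt and g m uu vv :: int
  assumes fin: "finite P" and gpos: "g > 0"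
    and bez: "uu * fst (b - a) + vv * snd (b - a) = g"
    and m1: "m \<ge> 1"
    and lev: "\<And>p. p \<in> P \<Longrightarrow> 0 < outd a b p \<and> outd a b p < m * g \<and> g dvd outd a b p"
    and wid: "\<And>p q. p \<in> P \<Longrightarrow> q \<in> P \<Longrightarrow> outd a b p = outd a b q \<Longrightarrow>
       (\<exists>k. g * fst (q - p) = k * fst (b - a) \<and> g * snd (q - p) = k * snd (b - a) \<and> \<bar>k\<bar> \<le> g)"
  shows "int (card P) \<le> (m - 1) * (2 * g + 1)"
proof -
  define bp where "bp v = (SOME q. q \<in> P \<and> outd a b q = v)" for v
  have bp: "bp (outd a b p) \<in> P \<and> outd a b (bp (outd a b p)) = outd a b p" if "p \<in> P" for p
    unfolding bp_def by (rule someI[of _ p]) (use that in auto)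
  define kk where "kk p = uu * fst (p - bp (outd a b p)) + vv * snd (p - bp (outd a b p))" for p
  have kk: "g * fst (p - bp (outd a b p)) = kk p * fst (b - a) \<and> g * snd (p - bp (outd a b p)) = kk p * snd (b - a) \<and> \<bar>kk p\<bar> \<le> g"
    if p: "p \<in> P" for p
  proof -
    obtain k where k: "g * fst (p - bp (outd a b p)) = k * fst (b - a)" "g * snd (p - bp (outd a b p)) = k * snd (b - a)" "\<bar>k\<bar> \<le> g"
      using wid[of "bp (outd a b p)" p] bp[OF p] p by auto
    have "g * kk p = uu * (g * fst (p - bp (outd a b p))) + vv * (g * snd (p - bp (outd a b p)))"
      unfolding kk_def by (simp add: algebra_simps)
    also have "\<dots> = k * (uu * fst (b - a) + vv * snd (b - a))" unfolding k(1,2) by (simp add: algebra_simps)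
    also have "\<dots> = g * k" using bez by simp
    finally have "kk p = k" using gpos by simp
    then show ?thesis using k by simp
  qed
  define \<phi> where "\<phi> p = (outd a b p div g, kk p)" for p
  have inj: "inj_on \<phi> P"
  proof (rule inj_onI)
    fix p q assume p: "p \<in> P" and q: "q \<in> P" and e: "\<phi> p = \<phi> q"
    have "outd a b p div g = outd a b q div g" using e \<phi>_def by simp
    then have vpq: "outd a b p = outd a b q" using lev[OF p] lev[OF q] by (metis dvd_div_mult_self)
    have kpq: "kk p = kk q" using e \<phi>_def by simp
    have "g * fst (p - bp (outd a b p)) = g * fst (q - bp (outd a b p))"
      using kk[OF p] kk[OF q] vpq kpq by simp
    moreover have "g * snd (p - bp (outd a b p)) = g * snd (q - bp (outd a b p))"
      using kk[OF p] kk[OF q] vpq kpq by simp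
    ultimately show "p = q" using gpos by (simp add: prod_eq_iff)
  qed
  have sub: "\<phi> ` P \<subseteq> {1..m - 1} \<times> {-g..g}"
  proof
    fix x assume "x \<in> \<phi> ` P"
    then obtain p where p: "p \<in> P" and x: "x = \<phi> p" by auto
    obtain t where t: "outd a b p = g * t" using lev[OF p] by (auto elim: dvdE)
    have "0 < g * t" "g * t < m * g" using lev[OF p] t by auto
    then have "0 < t" "t < m" using gpos by (auto simp: zero_less_mult_iff mult.commute)
    moreover have "outd a b p div g = t" using t gpos by simp
    ultimately show "x \<in> {1..m - 1} \<times> {-g..g}" using x kk[OF p] \<phi>_def by auto
  qed
  have "card P = card (\<phi> ` P)" using card_image[OF inj] by simp
  also have "\<dots> \<le> card ({1..m - 1} \<times> {-g..g})" by (rule card_mono) (auto simp: sub)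
  also have "\<dots> = nat (m - 1) * nat (2 * g + 1)" by (simp add: card_cartesian_product)
  finally have "int (card P) \<le> int (nat (m - 1) * nat (2 * g + 1))" by linarith
  also have "\<dots> = (m - 1) * (2 * g + 1)" using gpos m1 by simp
  finally show ?thesis .
qed

lemma count_tri:
  fixes a b f :: pt and g m uu vv :: int and T :: "pt set"
  assumes gpos: "g > 0" and bez: "uu * fst (b - a) + vv * snd (b - a) = g"
    and gB1: "g dvd fst (b - a)" and gB2: "g dvd snd (b - a)"
    and hdef: "cross (f - a) (b - a) = m * g" and m1: "m \<ge> 1"
    and T_def: "T = {p. 0 < outd a b p \<and> outd a b p < m * g \<and> 0 \<le> cross (f - a) (p - a)
                     \<and> cross (f - a) (p - a) + outd a b p \<le> m * g}"
    and finT: "finite T"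
  shows "(m - 1) * g \<le> 2 * int (card T)"
proof -
  define Bx where "Bx = fst (b - a)"
  define By where "By = snd (b - a)"
  define wx where "wx = Bx div g"
  define wy where "wy = By div g"
  have Bxw: "Bx = g * wx" using gB1 unfolding wx_def Bx_def by simp
  have Byw: "By = g * wy" using gB2 unfolding wy_def By_def by simp
  define Fx where "Fx = fst (f - a)"
  define Fy where "Fy = snd (f - a)"
  define E where "E = - Fx * uu - Fy * vv"
  have Fw: "Fx * wy - Fy * wx = m"
  proof -
    have "g * (Fx * wy - Fy * wx) = Fx * By - Fy * Bx" unfolding Bxw Byw by (simp add: algebra_simps)
    also have "\<dots> = m * g" using hdef unfolding Fx_def Fy_def Bx_def By_def cross_def by simp
    finally show ?thesis using gpos by (simp add: mult.commute)
  qed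
  define c where "c i = - ((i * E) div m)" for i
  define \<psi> where "\<psi> ij = (fst a + fst ij * vv + (snd ij + c (fst ij)) * wx,
                         snd a - fst ij * uu + (snd ij + c (fst ij)) * wy)" for ij :: "int \<times> int"
  have Vpsi: "outd a b (\<psi> (i, j)) = i * g" for i j
  proof -
    have "outd a b (\<psi> (i, j)) = i * (uu * Bx + vv * By) + (j + c i) * (wx * By - wy * Bx)"
      unfolding outd_expand \<psi>_def Bx_def By_def by (simp add: algebra_simps)
    also have "wx * By - wy * Bx = 0" unfolding Bxw Byw by (simp add: algebra_simps)
    finally show ?thesis using bez Bx_def By_def by simp
  qed
  have Upsi: "cross (f - a) (\<psi> (i, j) - a) = (i * E) mod m + j * m" for i j
  proof -
    have "cross (f - a) (\<psi> (i, j) - a) = i * E + (j + c i) * (Fx * wy - Fy * wx)"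
      unfolding cross_def \<psi>_def E_def Fx_def Fy_def by (simp add: algebra_simps)
    also have "\<dots> = i * E - ((i * E) div m) * m + j * m" unfolding Fw c_def by (simp add: algebra_simps)
    also have "i * E - ((i * E) div m) * m = (i * E) mod m" by (simp add: minus_div_mult_eq_mod)
    finally show ?thesis .
  qed
  define D where "D = {1..m - 1} \<times> {0..g - 1}"
  define Par where "Par = {p. 0 < outd a b p \<and> outd a b p < m * g \<and> 0 \<le> cross (f - a) (p - a)
                     \<and> cross (f - a) (p - a) \<le> m * g}"
  have mpos: "m > 0" using m1 by simp
  have inj: "inj_on \<psi> D"
  proof (rule inj_onI)
    fix x y assume x: "x \<in> D" and y: "y \<in> D" and e: "\<psi> x = \<psi> y"
    obtain i j where ij: "x = (i, j)" by fastforce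
    obtain i' j' where ij': "y = (i', j')" by fastforce
    have "i * g = i' * g" using Vpsi[of i j] Vpsi[of i' j'] e ij ij' by (simp only:)
    then have ii: "i = i'" using gpos by simp
    have "(i * E) mod m + j * m = (i * E) mod m + j' * m" using Upsi[of i j] Upsi[of i' j'] e ij ij' ii by (simp only:)
    then have "j = j'" using mpos by simp
    then show "x = y" using ij ij' ii by simp
  qed
  have sub1: "\<psi> ` D \<subseteq> Par"
  proof
    fix x assume "x \<in> \<psi> ` D"
    then obtain i j where i: "1 \<le> i" "i \<le> m - 1" and j: "0 \<le> j" "j \<le> g - 1" and x: "x = \<psi> (i, j)"
      unfolding D_def by auto
    have r: "0 \<le> (i * E) mod m" "(i * E) mod m < m" using mpos by auto
    have "j * m \<le> (g - 1) * m" using j mpos by (simp add: mult_right_mono)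
    then have "(i * E) mod m + j * m \<le> m * g" using r by (simp add: algebra_simps)
    moreover have "0 \<le> (i * E) mod m + j * m" using r j mpos by simp
    moreover have "0 < i * g" "i * g < m * g" using i gpos by (auto simp: mult_strict_right_mono)
    ultimately show "x \<in> Par" by (simp add: Par_def x Vpsi Upsi)
  qed
  define \<phi> where "\<phi> p = (fst b + fst f - fst p, snd b + snd f - snd p)" for p :: pt
  have Vphi: "outd a b (\<phi> p) = m * g - outd a b p" for p
    using hdef unfolding outd_expand \<phi>_def cross_def by (simp add: algebra_simps)
  have Uphi: "cross (f - a) (\<phi> p - a) = m * g - cross (f - a) (p - a)" for p
    using hdef unfolding \<phi>_def cross_def by (simp add: algebra_simps)
  have phiphi: "\<phi> (\<phi> p) = p" for p unfolding \<phi>_def by simp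
  have sub2: "Par \<subseteq> T \<union> \<phi> ` T"
  proof
    fix p assume p: "p \<in> Par"
    show "p \<in> T \<union> \<phi> ` T"
    proof (cases "cross (f - a) (p - a) + outd a b p \<le> m * g")
      case True then show ?thesis using p unfolding Par_def T_def by auto
    next
      case False
      have "\<phi> p \<in> T" using p False by (auto simp: Par_def T_def Vphi Uphi mult.commute[of g m])
      then show ?thesis using phiphi[of p] by (metis UnI2 imageI)
    qed
  qed
  have "(m - 1) * g = int (card D)" unfolding D_def using m1 gpos by (simp add: card_cartesian_product)
  also have "card D = card (\<psi> ` D)" using card_image[OF inj] by simp
  also have "card (\<psi> ` D) \<le> card (T \<union> \<phi> ` T)"
    by (rule card_mono) (use finT sub1 sub2 in auto)
  also have "card (T \<union> \<phi> ` T) \<le> card T + card (\<phi> ` T)" by (rule card_Un_le)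
  also have "card (\<phi> ` T) \<le> card T" by (rule card_image_le[OF finT])
  finally show ?thesis by linarith
qed




lemma same_level:
  fixes A B C P1 P2 :: "real \<times> real"
  assumes D: "rcross (C - A) (B - A) > 0" and i1: "intri A B C P1" and i2: "intri A B C P2"
    and e: "rcross (P1 - A) (B - A) = rcross (P2 - A) (B - A)"
  shows "\<exists>l. \<bar>l\<bar> \<le> 1 \<and> fst P2 - fst P1 = l * (fst B - fst A) \<and> snd P2 - snd P1 = l * (snd B - snd A)"
proof -
  obtain u1 v1 where x: "0 \<le> u1" "0 \<le> v1" "u1 + v1 \<le> 1"
    "fst P1 = fst A + u1 * (fst B - fst A) + v1 * (fst C - fst A)"
    "snd P1 = snd A + u1 * (snd B - snd A) + v1 * (snd C - snd A)"
    using intri_E[OF i1] by blast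
  obtain u2 v2 where y: "0 \<le> u2" "0 \<le> v2" "u2 + v2 \<le> 1"
    "fst P2 = fst A + u2 * (fst B - fst A) + v2 * (fst C - fst A)"
    "snd P2 = snd A + u2 * (snd B - snd A) + v2 * (snd C - snd A)"
    using intri_E[OF i2] by blast
  have e1: "rcross (P1 - A) (B - A) = v1 * rcross (C - A) (B - A)"
    unfolding rcross_def by (simp add: x(4,5) algebra_simps)
  have e2: "rcross (P2 - A) (B - A) = v2 * rcross (C - A) (B - A)"
    unfolding rcross_def by (simp add: y(4,5) algebra_simps)
  have "v1 = v2" using e e1 e2 D by simp
  then show ?thesis
    by (intro exI[of _ "u2 - u1"]) (use x y in \<open>auto simp: algebra_simps\<close>)
qed

lemma lattice_width:
  fixes p q a b :: pt and g u0 v0 :: int and l :: real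
  assumes bez: "u0 * fst (b - a) + v0 * snd (b - a) = g" and gpos: "g > 0"
    and l: "\<bar>l\<bar> \<le> 1"
    and ex: "real_of_int (fst q - fst p) = l * real_of_int (fst b - fst a)"
    and ey: "real_of_int (snd q - snd p) = l * real_of_int (snd b - snd a)"
  shows "\<exists>k. g * fst (q - p) = k * fst (b - a) \<and> g * snd (q - p) = k * snd (b - a) \<and> \<bar>k\<bar> \<le> g"
proof -
  define k where "k = u0 * (fst q - fst p) + v0 * (snd q - snd p)"
  have rk: "real_of_int k = l * real_of_int g"
  proof -
    have "real_of_int k = real_of_int u0 * real_of_int (fst q - fst p) + real_of_int v0 * real_of_int (snd q - snd p)"
      unfolding k_def by simp
    also have "\<dots> = l * (real_of_int (u0 * fst (b - a) + v0 * snd (b - a)))"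
      unfolding ex ey by (simp add: algebra_simps)
    finally show ?thesis by (simp only: bez)
  qed
  have "real_of_int (g * fst (q - p)) = real_of_int (k * fst (b - a))"
  proof -
    have "real_of_int (g * fst (q - p)) = real_of_int g * real_of_int (fst q - fst p)" by simp
    also have "\<dots> = (l * real_of_int g) * real_of_int (fst b - fst a)" unfolding ex by simp
    also have "\<dots> = real_of_int (k * fst (b - a))" unfolding rk[symmetric] by simp
    finally show ?thesis .
  qed
  moreover have "real_of_int (g * snd (q - p)) = real_of_int (k * snd (b - a))"
  proof -
    have "real_of_int (g * snd (q - p)) = real_of_int g * real_of_int (snd q - snd p)" by simp
    also have "\<dots> = (l * real_of_int g) * real_of_int (snd b - snd a)" unfolding ey by simp
    also have "\<dots> = real_of_int (k * snd (b - a))" unfolding rk[symmetric] by simp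
    finally show ?thesis .
  qed
  moreover have "\<bar>real_of_int k\<bar> \<le> real_of_int g" using rk l gpos by (simp add: abs_mult mult_left_le_one_le)
  ultimately show ?thesis by (intro exI[of _ k]) (simp only: of_int_eq_iff of_int_abs of_int_le_iff, simp)
qed

lemma D_pos:
  assumes "intri A B C p" "rcross (p - A) (B - A) > 0"
  shows "rcross (C - A) (B - A) > 0"
proof -
  obtain u v where x: "0 \<le> u" "0 \<le> v" "u + v \<le> 1"
    "fst p = fst A + u * (fst B - fst A) + v * (fst C - fst A)"
    "snd p = snd A + u * (snd B - snd A) + v * (snd C - snd A)"
    using intri_E[OF assms(1)] by blast
  have "rcross (p - A) (B - A) = v * rcross (C - A) (B - A)"
    unfolding rcross_def by (simp add: x(4,5) algebra_simps)
  then show ?thesis using assms(2) x(2) by (simp add: zero_less_mult_iff)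
qed

lemma level_dot_inj:
  fixes a b p q :: pt
  assumes ab: "a \<noteq> b" and o: "outd a b p = outd a b q" and d: "dotp (b - a) p = dotp (b - a) q"
  shows "p = q"
proof -
  define Bx where "Bx = fst b - fst a"
  define By where "By = snd b - snd a"
  define dx where "dx = fst q - fst p"
  define dy where "dy = snd q - snd p"
  have c: "dx * By - dy * Bx = 0" using o unfolding outd_expand dx_def dy_def Bx_def By_def by (simp add: algebra_simps)
  have t: "Bx * dx + By * dy = 0" using d unfolding dotp_def dx_def dy_def Bx_def By_def by (simp add: algebra_simps)
  have "dx * (Bx * Bx + By * By) = Bx * (Bx * dx + By * dy) + By * (dx * By - dy * Bx)" by (simp add: algebra_simps)
  then have x0: "dx * (Bx * Bx + By * By) = 0" using c t by simp
  have "dy * (Bx * Bx + By * By) = By * (Bx * dx + By * dy) - Bx * (dx * By - dy * Bx)" by (simp add: algebra_simps)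
  then have y0: "dy * (Bx * Bx + By * By) = 0" using c t by simp
  have "Bx \<noteq> 0 \<or> By \<noteq> 0" using ab unfolding Bx_def By_def by (auto simp: prod_eq_iff)
  then have "Bx * Bx + By * By \<noteq> 0" by (metis add_cancel_left_left mult_eq_0_iff not_sum_squares_lt_zero sum_squares_eq_zero_iff)
  then have "dx = 0" "dy = 0" using x0 y0 by auto
  then show ?thesis unfolding dx_def dy_def by (simp add: prod_eq_iff)
qed

lemma first_along_prop:
  fixes a b :: pt and F :: "pt set"
  assumes fin: "finite F" and ne: "F \<noteq> {}" and ab: "a \<noteq> b"
    and lev: "\<And>p q. p \<in> F \<Longrightarrow> q \<in> F \<Longrightarrow> outd a b p = outd a b q"
  shows "first_along a b F \<in> F \<and> (\<forall>q\<in>F. dotp (b - a) (first_along a b F) \<le> dotp (b - a) q)"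
proof -
  have "Min (dotp (b - a) ` F) \<in> dotp (b - a) ` F" using fin ne by (intro Min_in) auto
  then obtain f where f: "f \<in> F" "dotp (b - a) f = Min (dotp (b - a) ` F)"
    by (metis imageE)
  have fmin: "\<forall>q\<in>F. dotp (b - a) f \<le> dotp (b - a) q" using f fin by simp
  show ?thesis unfolding first_along_def
  proof (rule theI2[of _ f])
    show "f \<in> F \<and> (\<forall>q\<in>F. dotp (b - a) f \<le> dotp (b - a) q)" using f fmin by simp
    fix x assume x: "x \<in> F \<and> (\<forall>q\<in>F. dotp (b - a) x \<le> dotp (b - a) q)"
    then have "dotp (b - a) x = dotp (b - a) f" using f(1) fmin by (meson order_antisym)
    then show "x = f" using level_dot_inj[OF ab lev] x f(1) by blast
  next
    fix x assume "x \<in> F \<and> (\<forall>q\<in>F. dotp (b - a) x \<le> dotp (b - a) q)"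
    then show "x \<in> F \<and> (\<forall>q\<in>F. dotp (b - a) x \<le> dotp (b - a) q)" .
  qed
qed

lemma last_along_prop:
  fixes a b :: pt and F :: "pt set"
  assumes fin: "finite F" and ne: "F \<noteq> {}" and ab: "a \<noteq> b"
    and lev: "\<And>p q. p \<in> F \<Longrightarrow> q \<in> F \<Longrightarrow> outd a b p = outd a b q"
  shows "last_along a b F \<in> F \<and> (\<forall>q\<in>F. dotp (b - a) q \<le> dotp (b - a) (last_along a b F))"
proof -
  have "Max (dotp (b - a) ` F) \<in> dotp (b - a) ` F" using fin ne by (intro Max_in) auto
  then obtain f where f: "f \<in> F" "dotp (b - a) f = Max (dotp (b - a) ` F)"
    by (metis imageE)
  have fmax: "\<forall>q\<in>F. dotp (b - a) q \<le> dotp (b - a) f" using f fin by simp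
  show ?thesis unfolding last_along_def
  proof (rule theI2[of _ f])
    show "f \<in> F \<and> (\<forall>q\<in>F. dotp (b - a) q \<le> dotp (b - a) f)" using f fmax by simp
    fix x assume x: "x \<in> F \<and> (\<forall>q\<in>F. dotp (b - a) q \<le> dotp (b - a) x)"
    then have "dotp (b - a) x = dotp (b - a) f" using f(1) fmax by (meson order_antisym)
    then show "x = f" using level_dot_inj[OF ab lev] x f(1) by blast
  next
    fix x assume "x \<in> F \<and> (\<forall>q\<in>F. dotp (b - a) q \<le> dotp (b - a) x)"
    then show "x \<in> F \<and> (\<forall>q\<in>F. dotp (b - a) q \<le> dotp (b - a) x)" .
  qed
qed


definition EI :: "pt set \<Rightarrow> edge \<Rightarrow> bool" where
  "EI S e \<longleftrightarrow> (case e of (a, b, P) \<Rightarrow> a \<in> S \<and> b \<in> S \<and> P \<subseteq> S \<and> (\<forall>p\<in>P. 0 < outd a b p) \<and>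
     (P \<noteq> {} \<longrightarrow> (\<exists>c. (\<forall>p\<in>P. intri (rpt a) (rpt b) c (rpt p)) \<and>
        (\<forall>p\<in>S. 0 < outd a b p \<and> intri (rpt a) (rpt b) c (rpt p) \<longrightarrow> p \<in> P))))"

lemma rcr: "rcross (rpt p - rpt a) (rpt b - rpt a) = real_of_int (outd a b p)"
  by (simp add: rcross_rpt outd_def)

lemma digital_in:
  assumes dc: "digital_convex S" and sub: "X \<subseteq> S" and h: "rpt p \<in> convex hull (rpt ` X)"
  shows "p \<in> S"
proof -
  have "convex hull (rpt ` X) \<subseteq> convex hull (rpt ` S)" using sub by (intro hull_mono) auto
  then have "rpt p \<in> convex hull (rpt ` S) \<inter> range rpt" using h by auto
  then have "rpt p \<in> rpt ` S" using dc unfolding digital_convex_def by simp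
  then obtain q where "q \<in> S" "rpt p = rpt q" by auto
  then show ?thesis by (simp add: rpt_inj)
qed

lemma gcd_dvd_outd:
  "gcd (fst (b - a)) (snd (b - a)) dvd outd a b p"
proof -
  have "gcd (fst (b - a)) (snd (b - a)) dvd snd b - snd a" by (metis gcd_dvd2 snd_diff)
  moreover have "gcd (fst (b - a)) (snd (b - a)) dvd fst b - fst a" by (metis gcd_dvd1 fst_diff)
  ultimately show ?thesis unfolding outd_expand by (metis dvd_diff dvd_mult)
qed




lemma process_unres:
  assumes finS: "finite S" and dc: "digital_convex S" and ei: "EI S (a, b, P)" and ne: "P \<noteq> {}"
  shows "(\<forall>e\<in>set (process_edge (a, b, P)). EI S e)
   \<and> card P + 1 + 7 * sum_list (map (\<lambda>(a, b, P). card P) (process_edge (a, b, P))) \<le> 7 * card P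
   \<and> length (process_edge (a, b, P)) \<le> 3
   \<and> (\<forall>(a', b', P')\<in>set (process_edge (a, b, P)). b' = b \<or> b' \<in> fst ` set (process_edge (a, b, P)))
   \<and> a \<in> fst ` set (process_edge (a, b, P))
   \<and> (\<forall>p\<in>P. (\<exists>(a', b', P')\<in>set (process_edge (a, b, P)). p \<in> P') \<or>
          rpt p \<in> convex hull (rpt ` insert b (fst ` set (process_edge (a, b, P)))))"
proof -
  have eiu: "a \<in> S \<and> b \<in> S \<and> P \<subseteq> S \<and> (\<forall>p\<in>P. 0 < outd a b p) \<and>
     (P \<noteq> {} \<longrightarrow> (\<exists>c. (\<forall>p\<in>P. intri (rpt a) (rpt b) c (rpt p)) \<and>
        (\<forall>p\<in>S. 0 < outd a b p \<and> intri (rpt a) (rpt b) c (rpt p) \<longrightarrow> p \<in> P)))"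
    using ei unfolding EI_def by simp
  have aS: "a \<in> S" and bS: "b \<in> S" and PS: "P \<subseteq> S" and Ppos: "\<And>p. p \<in> P \<Longrightarrow> 0 < outd a b p"
    using eiu by blast+
  obtain c where cin0: "\<forall>p\<in>P. intri (rpt a) (rpt b) c (rpt p)"
    and ccl0: "\<forall>p\<in>S. 0 < outd a b p \<and> intri (rpt a) (rpt b) c (rpt p) \<longrightarrow> p \<in> P"
    using eiu ne by blast
  have cin: "\<And>p. p \<in> P \<Longrightarrow> intri (rpt a) (rpt b) c (rpt p)" using cin0 by blast
  have ccl: "\<And>p. p \<in> S \<Longrightarrow> 0 < outd a b p \<Longrightarrow> intri (rpt a) (rpt b) c (rpt p) \<Longrightarrow> p \<in> P"
    using ccl0 by blast
  have finP: "finite P" using finS PS finite_subset by blast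
  obtain p0 where p0: "p0 \<in> P" using ne by auto
  have ab: "a \<noteq> b" using Ppos[OF p0] by (auto simp: outd_def cross_def)
  define D where "D = rcross (c - rpt a) (rpt b - rpt a)"
  have Dpos: "D > 0" unfolding D_def
    using D_pos[OF cin[OF p0]] Ppos[OF p0] rcr[of p0 a b] by simp
  define h where "h = Max (outd a b ` P)"
  define F where "F = farthest a b P"
  have hge: "\<And>p. p \<in> P \<Longrightarrow> outd a b p \<le> h" unfolding h_def using finP by simp
  have hin: "h \<in> outd a b ` P" unfolding h_def using finP ne by (intro Max_in) auto
  have hpos: "h > 0" using hin Ppos by auto
  have F_eq: "F = {p \<in> P. outd a b p = h}" unfolding F_def farthest_def h_def by simp
  have FP: "F \<subseteq> P" unfolding F_eq by auto
  have finF: "finite F" using finP FP finite_subset by blast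
  have Fne: "F \<noteq> {}" using hin unfolding F_eq by auto
  have Flev: "\<And>p. p \<in> F \<Longrightarrow> outd a b p = h" unfolding F_eq by auto
  define f1 where "f1 = first_along a b F"
  define f2 where "f2 = last_along a b F"
  have f1p: "f1 \<in> F \<and> (\<forall>q\<in>F. dotp (b - a) f1 \<le> dotp (b - a) q)"
    unfolding f1_def by (rule first_along_prop[OF finF Fne ab]) (simp add: Flev)
  have f2p: "f2 \<in> F \<and> (\<forall>q\<in>F. dotp (b - a) q \<le> dotp (b - a) f2)"
    unfolding f2_def by (rule last_along_prop[OF finF Fne ab]) (simp add: Flev)
  have f1P: "f1 \<in> P" and f2P: "f2 \<in> P" using f1p f2p FP by auto
  have f1S: "f1 \<in> S" and f2S: "f2 \<in> S" using f1P f2P PS by auto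
  have hf1: "outd a b f1 = h" and hf2: "outd a b f2 = h" using f1p f2p Flev by auto
  define Bx where "Bx = fst (b - a)"
  define By where "By = snd (b - a)"
  define g where "g = gcd Bx By"
  have Bne: "Bx \<noteq> 0 \<or> By \<noteq> 0" using ab unfolding Bx_def By_def by (auto simp: prod_eq_iff)
  have gpos: "g > 0" unfolding g_def using Bne by simp
  obtain u0 v0 where bez: "u0 * Bx + v0 * By = g" unfolding g_def using bezout_int by blast
  have gdv: "\<And>p. g dvd outd a b p" unfolding g_def Bx_def By_def by (rule gcd_dvd_outd)
  have gBx: "g dvd Bx" and gBy: "g dvd By" unfolding g_def by auto
  have "g dvd h" using gdv[of f1] hf1 by simp
  then obtain m where "h = g * m" unfolding dvd_def by blast
  then have hm: "h = m * g" by (simp add: mult.commute)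
  have m1: "m \<ge> 1" using hm hpos gpos by (metis int_one_le_iff_zero_less zero_less_mult_pos2)
  have BB: "Bx * Bx + By * By > 0" using Bne by (simp add: sum_squares_gt_zero_iff)
  have wid: "\<exists>k. g * fst (q - p) = k * Bx \<and> g * snd (q - p) = k * By \<and> \<bar>k\<bar> \<le> g"
    if p: "p \<in> P" and q: "q \<in> P" and e: "outd a b p = outd a b q" for p q
  proof -
    have "rcross (rpt p - rpt a) (rpt b - rpt a) = rcross (rpt q - rpt a) (rpt b - rpt a)"
      using e by (simp add: rcr)
    from same_level[OF Dpos[unfolded D_def] cin[OF p] cin[OF q] this]
    obtain l where l: "\<bar>l\<bar> \<le> 1" "fst (rpt q) - fst (rpt p) = l * (fst (rpt b) - fst (rpt a))"
      "snd (rpt q) - snd (rpt p) = l * (snd (rpt b) - snd (rpt a))" by blast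
    have "real_of_int (fst q - fst p) = l * real_of_int (fst b - fst a)"
      using l(2) by (simp add: rpt_def)
    moreover have "real_of_int (snd q - snd p) = l * real_of_int (snd b - snd a)"
      using l(3) by (simp add: rpt_def)
    ultimately show ?thesis
      using lattice_width[of u0 b a v0 g l q p] bez gpos l(1) unfolding Bx_def By_def by auto
  qed
  have dotk: "g * dotp (b - a) (q - p) = k * (Bx * Bx + By * By)"
    if "g * fst (q - p) = k * Bx" "g * snd (q - p) = k * By" for p q k
  proof -
    have "g * dotp (b - a) (q - p) = Bx * (g * fst (q - p)) + By * (g * snd (q - p))"
      unfolding dotp_def Bx_def By_def by (simp add: algebra_simps)
    also have "\<dots> = k * (Bx * Bx + By * By)" unfolding that by (simp add: algebra_simps)
    finally show ?thesis .
  qed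
  have dotdiff: "dotp (b - a) (q - p) = dotp (b - a) q - dotp (b - a) p" for p q
    unfolding dotp_def by (simp add: algebra_simps)
  obtain k2 where k2: "g * fst (f2 - f1) = k2 * Bx" "g * snd (f2 - f1) = k2 * By" "\<bar>k2\<bar> \<le> g"
    using wid[OF f1P f2P] hf1 hf2 by auto
  have k2nn: "k2 \<ge> 0"
  proof -
    have "dotp (b - a) f1 \<le> dotp (b - a) f2" using f1p f2p by auto
    then have "0 \<le> g * dotp (b - a) (f2 - f1)" using gpos by (simp add: dotdiff)
    then have "0 \<le> k2 * (Bx * Bx + By * By)" using dotk[OF k2(1,2)] by simp
    then show ?thesis using BB by (simp add: zero_le_mult_iff)
  qed
  have k2g: "k2 \<le> g" using k2(3) by simp
  have kF: "\<exists>kp. g * fst (p - f1) = kp * Bx \<and> g * snd (p - f1) = kp * By \<and> 0 \<le> kp \<and> kp \<le> k2"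
    if p: "p \<in> F" for p
  proof -
    have pP: "p \<in> P" using p FP by auto
    have "outd a b f1 = outd a b p" using hf1 Flev[OF p] by simp
    from wid[OF f1P pP this] obtain kp where kp: "g * fst (p - f1) = kp * Bx" "g * snd (p - f1) = kp * By"
      by blast
    have "dotp (b - a) f1 \<le> dotp (b - a) p" using f1p p by auto
    then have "0 \<le> g * dotp (b - a) (p - f1)" using gpos by (simp add: dotdiff)
    then have "0 \<le> kp * (Bx * Bx + By * By)" using dotk[OF kp] by simp
    then have "0 \<le> kp" using BB by (simp add: zero_le_mult_iff)
    moreover have "dotp (b - a) p \<le> dotp (b - a) f2" using f2p p by auto
    then have "0 \<le> g * dotp (b - a) (f2 - p)" using gpos by (simp add: dotdiff)
    moreover have "g * fst (f2 - p) = (k2 - kp) * Bx" "g * snd (f2 - p) = (k2 - kp) * By"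
      using k2(1,2) kp by (simp_all add: algebra_simps)
    ultimately have "0 \<le> (k2 - kp) * (Bx * Bx + By * By)" using dotk[of f2 p "k2 - kp"] by simp
    then have "kp \<le> k2" using BB by (simp add: zero_le_mult_iff)
    then show ?thesis using kp \<open>0 \<le> kp\<close> by blast
  qed
  define U where "U p = cross (f1 - a) (p - a)" for p
  define V where "V p = outd a b p" for p
  have hU: "cross (f1 - a) (b - a) = h" using hf1 unfolding outd_def by simp
  have I1: "outd a f1 p = - U p" for p unfolding U_def outd_def cross_def by (simp add: algebra_simps)
  have I5: "outd f1 b p = U p + V p - h" for p unfolding U_def V_def using outd_fb[of f1 b p a] hf1 by simp
  have I2: "g * outd f2 b p = g * U p + (g - k2) * V p - g * h" for p
  proof -
    have "g * cross (f2 - a) (p - a) = g * U p + (g * fst (f2 - f1)) * (snd p - snd a) - (g * snd (f2 - f1)) * (fst p - fst a)"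
      unfolding U_def cross_def by (simp add: algebra_simps)
    also have "\<dots> = g * U p - k2 * V p"
      unfolding k2(1,2) V_def outd_expand Bx_def By_def by (simp add: algebra_simps)
    finally have "g * cross (f2 - a) (p - a) = g * U p - k2 * V p" .
    moreover have "outd f2 b p = cross (f2 - a) (p - a) + V p - h" using outd_fb[of f2 b p a] hf2 V_def by simp
    then have "g * outd f2 b p = g * (cross (f2 - a) (p - a) + V p - h)" by (rule arg_cong[where f="\<lambda>x. g * x"])
    then have "g * outd f2 b p = g * cross (f2 - a) (p - a) + g * V p - g * h" by (simp add: algebra_simps)
    ultimately show ?thesis by (simp add: algebra_simps)
  qed
  have I3: "g * outd f1 f2 p = k2 * (V p - h)" for p
  proof -
    have "g * outd f1 f2 p = (fst p - fst f1) * (g * snd (f2 - f1)) - (snd p - snd f1) * (g * fst (f2 - f1))"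
      unfolding outd_expand by (simp add: algebra_simps)
    also have "\<dots> = k2 * ((fst p - fst f1) * By - (snd p - snd f1) * Bx)" unfolding k2(1,2) by (simp add: algebra_simps)
    also have "(fst p - fst f1) * By - (snd p - snd f1) * Bx = V p - h"
      using hf1 unfolding V_def outd_expand Bx_def By_def by (simp add: algebra_simps)
    finally show ?thesis .
  qed
  have I4: "g * U p = kp * h" if "g * fst (p - f1) = kp * Bx" "g * snd (p - f1) = kp * By" for p kp
  proof -
    have "g * U p = (fst f1 - fst a) * (g * snd (p - f1)) - (snd f1 - snd a) * (g * fst (p - f1))"
      unfolding U_def cross_def by (simp add: algebra_simps)
    also have "\<dots> = kp * cross (f1 - a) (b - a)" unfolding that cross_def Bx_def By_def by (simp add: algebra_simps)
    finally show ?thesis using hU by simp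
  qed
  have Vle: "\<And>p. p \<in> P \<Longrightarrow> V p \<le> h" using hge V_def by simp
  have Vpos: "\<And>p. p \<in> P \<Longrightarrow> 0 < V p" using Ppos V_def by simp
  define P1 where "P1 = right_of a f1 P"
  define P2 where "P2 = right_of f1 f2 P"
  define P3 where "P3 = right_of f2 b P"
  have P2e: "P2 = {}"
  proof -
    have "outd f1 f2 p \<le> 0" if "p \<in> P" for p
    proof -
      have "k2 * (V p - h) \<le> 0" using k2nn Vle[OF that] by (simp add: mult_nonneg_nonpos)
      then have "g * outd f1 f2 p \<le> 0" using I3 by simp
      then show ?thesis using gpos by (simp add: mult_le_0_iff)
    qed
    then show ?thesis unfolding P2_def right_of_def by force
  qed
  have inP1: "p \<in> P1 \<longleftrightarrow> p \<in> P \<and> U p < 0" for p unfolding P1_def right_of_def using I1 by auto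
  have inP3: "p \<in> P3 \<longleftrightarrow> p \<in> P \<and> 0 < g * U p + (g - k2) * V p - g * h" for p
  proof -
    have "0 < outd f2 b p \<longleftrightarrow> 0 < g * outd f2 b p" using gpos by (simp add: zero_less_mult_iff)
    then show ?thesis unfolding P3_def right_of_def using I2 by auto
  qed
  have P13: "P1 \<inter> P3 = {}"
  proof -
    have False if p1: "p \<in> P1" and p3: "p \<in> P3" for p
    proof -
      have pP: "p \<in> P" and u: "U p < 0" using p1 inP1 by auto
      have "g * U p < 0" using u gpos by (simp add: mult_pos_neg)
      moreover have "(g - k2) * V p \<le> (g - k2) * h" using k2g Vle[OF pP] by (simp add: mult_left_mono)
      moreover have "0 \<le> k2 * h" using k2nn hpos by simp
      moreover have "0 < g * U p + (g - k2) * V p - g * h" using p3 inP3 by auto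
      ultimately show False by (simp add: algebra_simps)
    qed
    then show ?thesis by blast
  qed
  define Tri where "Tri = {p. 0 < outd a b p \<and> outd a b p < m * g \<and> 0 \<le> cross (f1 - a) (p - a)
                     \<and> cross (f1 - a) (p - a) + outd a b p \<le> m * g}"
  have TriP: "Tri \<subseteq> P"
  proof
    fix p assume p: "p \<in> Tri"
    have it: "intri (rpt a) (rpt b) (rpt f1) (rpt p)"
      by (rule intri_lattice) (use p hU hpos hm in \<open>auto simp: Tri_def outd_def\<close>)
    have "rpt p \<in> convex hull (rpt ` {a, b, f1})" using it intri_hull by simp
    then have pS: "p \<in> S" by (rule digital_in[OF dc, rotated]) (use aS bS f1S in auto)
    have "intri (rpt a) (rpt b) c (rpt p)" by (rule intri_trans[OF it cin[OF f1P]])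
    then show "p \<in> P" using ccl[OF pS] p Tri_def by auto
  qed
  have finTri: "finite Tri" using finite_subset[OF TriP finP] .
  have cTri: "(m - 1) * g \<le> 2 * int (card Tri)"
    by (rule count_tri[OF gpos _ _ _ _ m1 Tri_def finTri]) (use bez gBx gBy hU hm in \<open>simp_all add: Bx_def By_def\<close>)
  define Plow where "Plow = {p \<in> P. outd a b p < h}"
  have finPlow: "finite Plow" using finP Plow_def by simp
  have cLow: "int (card Plow) \<le> (m - 1) * (2 * g + 1)"
  proof (rule count_low[where P=Plow and g=g and uu=u0 and vv=v0 and a=a and b=b and m=m])
    show "finite Plow" by (rule finPlow)
    show "0 < g" by (rule gpos)
    show "u0 * fst (b - a) + v0 * snd (b - a) = g" using bez Bx_def By_def by simp
    show "1 \<le> m" by (rule m1)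
    fix p assume "p \<in> Plow"
    then show "0 < outd a b p \<and> outd a b p < m * g \<and> g dvd outd a b p"
      using Ppos gdv hm Plow_def by auto
  next
    fix p q assume p: "p \<in> Plow" and q: "q \<in> Plow" and e: "outd a b p = outd a b q"
    show "\<exists>k. g * fst (q - p) = k * fst (b - a) \<and> g * snd (q - p) = k * snd (b - a) \<and> \<bar>k\<bar> \<le> g"
      using wid[of p q] p q e Plow_def Bx_def By_def by auto
  qed
  have Psplit: "P = Plow \<union> F" and PF: "Plow \<inter> F = {}"
    unfolding Plow_def F_eq using hge by force+
  have cardP: "card P = card Plow + card F"
    using Psplit PF finPlow finF by (simp add: card_Un_disjoint)
  have TF: "Tri \<inter> F = {}" unfolding Tri_def F_eq using hm by auto
  have TFdis: "(P1 \<union> P3) \<inter> (Tri \<union> F) = {}"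
  proof -
    have nT: "p \<notin> P1 \<and> p \<notin> P3" if p: "p \<in> Tri" for p
    proof -
      have pP: "p \<in> P" using p TriP by auto
      have u: "U p \<ge> 0" and uv: "U p + V p \<le> h" using p hm unfolding Tri_def U_def V_def by auto
      have "g * U p \<le> g * (h - V p)" using uv gpos by (simp add: mult_left_mono)
      moreover have "0 \<le> k2 * V p" using k2nn Vpos[OF pP] by simp
      ultimately have "g * U p + (g - k2) * V p - g * h \<le> 0" by (simp add: algebra_simps)
      then show ?thesis using inP1 inP3 u by auto
    qed
    have nF: "p \<notin> P1 \<and> p \<notin> P3" if p: "p \<in> F" for p
    proof -
      obtain kp where kp: "g * fst (p - f1) = kp * Bx" "g * snd (p - f1) = kp * By" "0 \<le> kp" "kp \<le> k2"
        using kF[OF p] by blast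
      have gu: "g * U p = kp * h" by (rule I4[OF kp(1,2)])
      have "0 \<le> g * U p" using gu kp(3) hpos by simp
      then have u: "U p \<ge> 0" using gpos by (simp add: zero_le_mult_iff)
      have vp: "V p = h" using Flev[OF p] V_def by simp
      have "kp * h \<le> k2 * h" using kp(4) hpos by (simp add: mult_right_mono)
      then have "g * U p + (g - k2) * V p - g * h \<le> 0" using gu vp by (simp add: algebra_simps)
      then show ?thesis using inP1 inP3 u by auto
    qed
    show ?thesis using nT nF by blast
  qed
  have P1P: "P1 \<subseteq> P" and P3P: "P3 \<subseteq> P" unfolding P1_def P3_def right_of_def by auto
  have finP1: "finite P1" and finP3: "finite P3" using P1P P3P finP finite_subset by blast+
  have P13sub: "P1 \<union> P3 \<subseteq> P - (Tri \<union> F)" using TFdis inP1 inP3 by blast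
  have cardD: "card (Tri \<union> F) = card Tri + card F" using TF finTri finF by (simp add: card_Un_disjoint)
  have c13: "card P1 + card P3 + card Tri + card F \<le> card P"
  proof -
    have "card P1 + card P3 = card (P1 \<union> P3)"
      using card_Un_disjoint[OF finP1 finP3 P13] by simp
    also have "\<dots> \<le> card (P - (Tri \<union> F))" by (rule card_mono) (use finP P13sub in auto)
    also have "\<dots> = card P - card (Tri \<union> F)" using TriP FP finTri finF by (subst card_Diff_subset) auto
    finally show ?thesis using cardD card_mono[OF finP, of "Tri \<union> F"] TriP FP by auto
  qed
  have cF1: "card F \<ge> 1" using finF Fne by (simp add: Suc_le_eq card_gt_0_iff)
  have cmain: "card P + 1 \<le> 7 * (card Tri + card F)"
  proof -
    have "int (card Plow) \<le> 3 * (m - 1) * g"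
    proof -
      have "(m - 1) * (2 * g + 1) \<le> (m - 1) * (3 * g)" using m1 gpos by (intro mult_left_mono) auto
      then show ?thesis using cLow by (simp add: algebra_simps)
    qed
    moreover have "3 * (m - 1) * g = 3 * ((m - 1) * g)" by simp
    ultimately have "int (card Plow) \<le> 6 * int (card Tri)" using cTri by linarith
    then have "int (card Plow) \<le> int (6 * card Tri)" by simp
    then have "card Plow \<le> 6 * card Tri" by (simp only: of_nat_le_iff)
    then show ?thesis unfolding distrib_left using cardP cF1 by linarith
  qed
  have pe: "process_edge (a, b, P) =
     (if f1 = f2 then [(a, f1, P1), (f2, b, P3)] else [(a, f1, P1), (f1, f2, P2), (f2, b, P3)])"
    unfolding process_edge_def using ne
    by (simp add: Let_def F_def[symmetric] f1_def[symmetric] f2_def[symmetric] P1_def P2_def P3_def)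
  define RA where "RA = rpt a"
  define RB where "RB = rpt b"
  have Dpos': "rcross (c - RA) (RB - RA) > 0" using Dpos D_def RA_def RB_def by simp
  have hX1: "rcross (rpt f1 - RA) (RB - RA) = real_of_int h" using rcr hf1 RA_def RB_def by simp
  have hX2: "rcross (rpt f2 - RA) (RB - RA) = real_of_int h" using rcr hf2 RA_def RB_def by simp
  have hr: "real_of_int h > 0" using hpos by simp
  have cinR: "\<And>p. p \<in> P \<Longrightarrow> intri RA RB c (rpt p)" using cin RA_def RB_def by simp
  have plR: "\<And>p. p \<in> P \<Longrightarrow> rcross (rpt p - RA) (RB - RA) \<le> real_of_int h"
    using hge rcr RA_def RB_def by simp
  define c1 where "c1 = RA + (real_of_int h / rcross (c - RA) (RB - RA)) *\<^sub>R (c - RA)"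
  define c3 where "c3 = RB + (real_of_int h / rcross (c - RA) (RB - RA)) *\<^sub>R (c - RB)"
  have EI1: "EI S (a, f1, P1)"
  proof -
    have "\<forall>p\<in>P1. intri (rpt a) (rpt f1) c1 (rpt p)"
    proof
      fix p assume p: "p \<in> P1"
      have pP: "p \<in> P" using p P1P by auto
      have pr: "rcross (rpt p - RA) (rpt f1 - RA) > 0" using p rcr[of p a f1] RA_def P1_def right_of_def by simp
      show "intri (rpt a) (rpt f1) c1 (rpt p)"
        using L1[OF Dpos' cinR[OF f1P] hX1 hr cinR[OF pP] plR[OF pP] pr] unfolding c1_def RA_def by simp
    qed
    moreover have "\<forall>p\<in>S. 0 < outd a f1 p \<and> intri (rpt a) (rpt f1) c1 (rpt p) \<longrightarrow> p \<in> P1"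
    proof (intro ballI impI)
      fix p assume pS: "p \<in> S" and h1: "0 < outd a f1 p \<and> intri (rpt a) (rpt f1) c1 (rpt p)"
      have pr: "rcross (rpt p - RA) (rpt f1 - RA) > 0" using h1 rcr[of p a f1] RA_def by simp
      have "intri RA RB c (rpt p) \<and> rcross (rpt p - RA) (RB - RA) > 0"
        using L2[OF Dpos' cinR[OF f1P] hX1 hr _ pr] h1 unfolding c1_def RA_def by simp
      then have "p \<in> P" using ccl[OF pS] rcr[of p a b] RA_def RB_def by simp
      then show "p \<in> P1" using h1 P1_def right_of_def by simp
    qed
    ultimately have ex: "\<exists>c. (\<forall>p\<in>P1. intri (rpt a) (rpt f1) c (rpt p)) \<and>
        (\<forall>p\<in>S. 0 < outd a f1 p \<and> intri (rpt a) (rpt f1) c (rpt p) \<longrightarrow> p \<in> P1)" by blast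
    have s1: "P1 \<subseteq> S" using P1P PS by auto
    have s2: "\<forall>p\<in>P1. 0 < outd a f1 p" unfolding P1_def right_of_def by auto
    show ?thesis unfolding EI_def using aS f1S s1 s2 ex by (simp only: prod.case) blast
  qed
  have EI3: "EI S (f2, b, P3)"
  proof -
    have "\<forall>p\<in>P3. intri (rpt f2) (rpt b) c3 (rpt p)"
    proof
      fix p assume p: "p \<in> P3"
      have pP: "p \<in> P" using p P3P by auto
      have pr: "rcross (rpt p - rpt f2) (RB - rpt f2) > 0" using p rcr[of p f2 b] RB_def P3_def right_of_def by simp
      show "intri (rpt f2) (rpt b) c3 (rpt p)"
        using L3[OF Dpos' cinR[OF f2P] hX2 hr cinR[OF pP] plR[OF pP] pr] unfolding c3_def RB_def by simp
    qed
    moreover have "\<forall>p\<in>S. 0 < outd f2 b p \<and> intri (rpt f2) (rpt b) c3 (rpt p) \<longrightarrow> p \<in> P3"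
    proof (intro ballI impI)
      fix p assume pS: "p \<in> S" and h1: "0 < outd f2 b p \<and> intri (rpt f2) (rpt b) c3 (rpt p)"
      have pr: "rcross (rpt p - rpt f2) (RB - rpt f2) > 0" using h1 rcr[of p f2 b] RB_def by simp
      have "intri RA RB c (rpt p) \<and> rcross (rpt p - RA) (RB - RA) > 0"
        using L4[OF Dpos' cinR[OF f2P] hX2 hr _ pr] h1 unfolding c3_def RB_def by simp
      then have "p \<in> P" using ccl[OF pS] rcr[of p a b] RA_def RB_def by simp
      then show "p \<in> P3" using h1 P3_def right_of_def by simp
    qed
    ultimately have ex: "\<exists>c. (\<forall>p\<in>P3. intri (rpt f2) (rpt b) c (rpt p)) \<and>
        (\<forall>p\<in>S. 0 < outd f2 b p \<and> intri (rpt f2) (rpt b) c (rpt p) \<longrightarrow> p \<in> P3)" by blast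
    have s1: "P3 \<subseteq> S" using P3P PS by auto
    have s2: "\<forall>p\<in>P3. 0 < outd f2 b p" unfolding P3_def right_of_def by auto
    show ?thesis unfolding EI_def using bS f2S s1 s2 ex by (simp only: prod.case) blast
  qed
  have EI2: "EI S (f1, f2, P2)" unfolding EI_def using f1S f2S P2e by simp
  have cover: "(\<exists>(a', b', P')\<in>set (process_edge (a, b, P)). p \<in> P') \<or>
          rpt p \<in> convex hull (rpt ` insert b (fst ` set (process_edge (a, b, P))))" if pP: "p \<in> P" for p
  proof (cases "p \<in> P1 \<or> p \<in> P3")
    case True then show ?thesis unfolding pe by auto
  next
    case False
    have u: "U p \<ge> 0" using False inP1 pP by auto
    have w: "g * U p + (g - k2) * V p - g * h \<le> 0" using False inP3 pP by auto
    have st: "rpt ` {a, b, f1, f2} \<subseteq> rpt ` insert b (fst ` set (process_edge (a, b, P)))"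
      unfolding pe by auto
    show ?thesis
    proof (cases "U p + V p \<le> h")
      case True
      have "intri (rpt a) (rpt b) (rpt f1) (rpt p)"
        by (rule disc_tri) (use True u hpos hf1 Vpos[OF pP] I1[of p] I5[of p] V_def in auto)
      then have "rpt p \<in> convex hull {rpt a, rpt b, rpt f1}" using intri_hull by simp
      moreover have "convex hull {rpt a, rpt b, rpt f1} \<subseteq> convex hull (rpt ` insert b (fst ` set (process_edge (a, b, P))))"
        using st by (intro hull_mono) auto
      ultimately show ?thesis by blast
    next
      case False
      have k2pos: "k2 > 0"
      proof (rule ccontr)
        assume "\<not> k2 > 0" then have "k2 = 0" using k2nn by simp
        then have "g * (U p + V p - h) \<le> 0" using w by (simp add: algebra_simps)
        then show False using False gpos by (simp add: mult_le_0_iff)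
      qed
      have "g * U f2 = k2 * h" by (rule I4[OF k2(1,2)])
      then have "g * U f2 > 0" using k2pos hpos by simp
      then have uf2: "U f2 > 0" using gpos by (simp add: zero_less_mult_iff)
      have o1: "outd f1 b f2 > 0" using I5[of f2] uf2 hf2 V_def by simp
      have o2: "outd f1 b p \<ge> 0" using I5[of p] False by simp
      have "g * outd f1 f2 p \<le> 0" using I3[of p] k2nn Vle[OF pP] by (simp add: mult_nonneg_nonpos)
      then have o3: "outd f1 f2 p \<le> 0" using gpos by (simp add: mult_le_0_iff)
      have "g * outd f2 b p \<le> 0" using I2[of p] w by simp
      then have o4: "outd f2 b p \<le> 0" using gpos by (simp add: mult_le_0_iff)
      have "intri (rpt f1) (rpt b) (rpt f2) (rpt p)" by (rule disc_tri[OF o1 o2 o3 o4])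
      then have "rpt p \<in> convex hull {rpt f1, rpt b, rpt f2}" using intri_hull by simp
      moreover have "convex hull {rpt f1, rpt b, rpt f2} \<subseteq> convex hull (rpt ` insert b (fst ` set (process_edge (a, b, P))))"
        using st by (intro hull_mono) auto
      ultimately show ?thesis by blast
    qed
  qed
  have sumeq: "sum_list (map (\<lambda>(a, b, P). card P) (process_edge (a, b, P))) = card P1 + card P3"
    unfolding pe using P2e by simp
  show ?thesis
  proof (intro conjI)
    show "\<forall>e\<in>set (process_edge (a, b, P)). EI S e" unfolding pe using EI1 EI2 EI3 by auto
    show "card P + 1 + 7 * sum_list (map (\<lambda>(a, b, P). card P) (process_edge (a, b, P))) \<le> 7 * card P"
      unfolding sumeq distrib_left using c13 cmain[unfolded distrib_left] by linarith
    show "length (process_edge (a, b, P)) \<le> 3" unfolding pe by simp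
    show "\<forall>(a', b', P')\<in>set (process_edge (a, b, P)). b' = b \<or> b' \<in> fst ` set (process_edge (a, b, P))"
      unfolding pe by auto
    show "a \<in> fst ` set (process_edge (a, b, P))" unfolding pe by auto
    show "\<forall>p\<in>P. (\<exists>(a', b', P')\<in>set (process_edge (a, b, P)). p \<in> P') \<or>
          rpt p \<in> convex hull (rpt ` insert b (fst ` set (process_edge (a, b, P))))"
      using cover by blast
  qed
qed




lemma type1_real:
  fixes A0 B0 M Pp d :: "real \<times> real"
  assumes H: "rcross (M - A0) (B0 - A0) > 0"
    and V: "rcross (Pp - A0) (B0 - A0) \<le> rcross (M - A0) (B0 - A0)"
    and Z: "rcross (Pp - A0) (M - A0) > 0"
    and supp: "rcross (Pp - A0) d \<le> 0" and Kb: "rcross (B0 - A0) d < 0" and Km: "rcross (M - A0) d \<le> 0"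
  shows "intri A0 M (M + (rcross (M - A0) d / rcross (B0 - A0) d) *\<^sub>R (A0 - B0)) Pp"
proof -
  define H0 where "H0 = rcross (M - A0) (B0 - A0)"
  define V0 where "V0 = rcross (Pp - A0) (B0 - A0)"
  define Z0 where "Z0 = rcross (Pp - A0) (M - A0)"
  define K1 where "K1 = rcross (B0 - A0) d"
  define K2 where "K2 = rcross (M - A0) d"
  have cx: "H0 * (fst Pp - fst A0) = V0 * (fst M - fst A0) + Z0 * (fst A0 - fst B0)"
    unfolding H0_def V0_def Z0_def rcross_def by (simp add: algebra_simps)
  have cy: "H0 * (snd Pp - snd A0) = V0 * (snd M - snd A0) + Z0 * (snd A0 - snd B0)"
    unfolding H0_def V0_def Z0_def rcross_def by (simp add: algebra_simps)
  have cs: "H0 * rcross (Pp - A0) d = V0 * K2 - Z0 * K1"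
    unfolding H0_def V0_def Z0_def K1_def K2_def rcross_def by (simp add: algebra_simps)
  have H0p: "H0 > 0" using H H0_def by simp
  have K1n: "K1 < 0" using Kb K1_def by simp
  have Z0p: "Z0 > 0" using Z Z0_def by simp
  have sc: "V0 * K2 \<le> Z0 * K1"
  proof -
    have "H0 * rcross (Pp - A0) d \<le> 0" using supp H0p by (simp add: mult_nonneg_nonpos less_imp_le)
    then show ?thesis using cs by simp
  qed
  have K2n: "K2 < 0"
  proof (rule ccontr)
    assume "\<not> K2 < 0" then have "K2 = 0" using Km K2_def by simp
    then have "0 \<le> Z0 * K1" using sc by simp
    moreover have "Z0 * K1 < 0" using Z0p K1n by (simp add: mult_pos_neg)
    ultimately show False by simp
  qed
  define l where "l = K2 / K1"
  have lpos: "l > 0" unfolding l_def using K2n K1n by (simp add: divide_neg_neg)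
  define x where "x = V0 / H0"
  define z where "z = Z0 / H0"
  define al where "al = x - z / l"
  define be where "be = z / l"
  have be0: "0 \<le> be" unfolding be_def z_def using Z0p H0p lpos by simp
  have "z \<le> x * l"
  proof -
    have "Z0 \<le> V0 * K2 / K1" using sc K1n by (simp add: field_simps)
    then show ?thesis unfolding x_def z_def l_def using H0p by (simp add: field_simps)
  qed
  then have al0: "0 \<le> al" unfolding al_def using lpos by (simp add: field_simps)
  have "x \<le> 1" unfolding x_def using V H0p V0_def H0_def by simp
  then have s1: "al + be \<le> 1" unfolding al_def be_def by simp
  have H0n: "H0 \<noteq> 0" and ln: "l \<noteq> 0" using H0p lpos by auto
  have gen: "xp = xa + al * (xm - xa) + be * ((xm + l * (xa - xb)) - xa)"
    if "H0 * (xp - xa) = V0 * (xm - xa) + Z0 * (xa - xb)" for xp xa xm xb :: real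
  proof -
    have "xa + al * (xm - xa) + be * ((xm + l * (xa - xb)) - xa) = xa + x * (xm - xa) + z * (xa - xb)"
      unfolding al_def be_def using ln by (simp add: field_simps)
    also have "\<dots> = xp" unfolding x_def z_def using solve_lin[OF H0n that] by simp
    finally show ?thesis by simp
  qed
  show ?thesis
  proof (rule intri_I[OF al0 be0 s1])
    show "fst Pp = fst A0 + al * (fst M - fst A0) + be * (fst (M + (rcross (M - A0) d / rcross (B0 - A0) d) *\<^sub>R (A0 - B0)) - fst A0)"
      using gen[OF cx] unfolding l_def K1_def K2_def by simp
    show "snd Pp = snd A0 + al * (snd M - snd A0) + be * (snd (M + (rcross (M - A0) d / rcross (B0 - A0) d) *\<^sub>R (A0 - B0)) - snd A0)"
      using gen[OF cy] unfolding l_def K1_def K2_def by simp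
  qed
qed


lemma type2_real:
  fixes A0 B0 M Pp d :: "real \<times> real"
  assumes H: "rcross (M - A0) (B0 - A0) > 0"
    and V: "rcross (Pp - A0) (B0 - A0) \<le> rcross (M - A0) (B0 - A0)"
    and Z: "rcross (Pp - M) (B0 - M) > 0"
    and supp: "rcross (Pp - B0) d \<le> 0" and Ka: "rcross (A0 - B0) d < 0" and Km: "rcross (M - B0) d \<le> 0"
  shows "intri M B0 (M + (rcross (M - B0) d / rcross (A0 - B0) d) *\<^sub>R (B0 - A0)) Pp"
proof -
  define H0 where "H0 = rcross (M - A0) (B0 - A0)"
  define V0 where "V0 = rcross (Pp - A0) (B0 - A0)"
  define Z0 where "Z0 = rcross (Pp - M) (B0 - M)"
  define K1 where "K1 = rcross (A0 - B0) d"
  define K2 where "K2 = rcross (M - B0) d"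
  have cx: "H0 * (fst Pp - fst B0) = V0 * (fst M - fst B0) + Z0 * (fst B0 - fst A0)"
    unfolding H0_def V0_def Z0_def rcross_def by (simp add: algebra_simps)
  have cy: "H0 * (snd Pp - snd B0) = V0 * (snd M - snd B0) + Z0 * (snd B0 - snd A0)"
    unfolding H0_def V0_def Z0_def rcross_def by (simp add: algebra_simps)
  have cs: "H0 * rcross (Pp - B0) d = V0 * K2 - Z0 * K1"
    unfolding H0_def V0_def Z0_def K1_def K2_def rcross_def by (simp add: algebra_simps)
  have H0p: "H0 > 0" using H H0_def by simp
  have K1n: "K1 < 0" using Ka K1_def by simp
  have Z0p: "Z0 > 0" using Z Z0_def by simp
  have sc: "V0 * K2 \<le> Z0 * K1"
  proof -
    have "H0 * rcross (Pp - B0) d \<le> 0" using supp H0p by (simp add: mult_nonneg_nonpos less_imp_le)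
    then show ?thesis using cs by simp
  qed
  have K2n: "K2 < 0"
  proof (rule ccontr)
    assume "\<not> K2 < 0" then have "K2 = 0" using Km K2_def by simp
    then have "0 \<le> Z0 * K1" using sc by simp
    moreover have "Z0 * K1 < 0" using Z0p K1n by (simp add: mult_pos_neg)
    ultimately show False by simp
  qed
  define l where "l = K2 / K1"
  have lpos: "l > 0" unfolding l_def using K2n K1n by (simp add: divide_neg_neg)
  define x where "x = V0 / H0"
  define z where "z = Z0 / H0"
  define al where "al = 1 - x"
  define be where "be = z / l"
  have be0: "0 \<le> be" unfolding be_def z_def using Z0p H0p lpos by simp
  have "z \<le> x * l"
  proof -
    have "Z0 \<le> V0 * K2 / K1" using sc K1n by (simp add: field_simps)
    then show ?thesis unfolding x_def z_def l_def using H0p by (simp add: field_simps)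
  qed
  then have s1: "al + be \<le> 1" unfolding al_def be_def using lpos by (simp add: field_simps)
  have "x \<le> 1" unfolding x_def using V H0p V0_def H0_def by simp
  then have al0: "0 \<le> al" unfolding al_def by simp
  have H0n: "H0 \<noteq> 0" and ln: "l \<noteq> 0" using H0p lpos by auto
  have gen: "xp = xm + al * (xb - xm) + be * ((xm + l * (xb - xa)) - xm)"
    if "H0 * (xp - xb) = V0 * (xm - xb) + Z0 * (xb - xa)" for xp xa xm xb :: real
  proof -
    have "xm + al * (xb - xm) + be * ((xm + l * (xb - xa)) - xm) = xb + x * (xm - xb) + z * (xb - xa)"
      unfolding al_def be_def using ln by (simp add: field_simps)
    also have "\<dots> = xp" unfolding x_def z_def using solve_lin[OF H0n that] by simp
    finally show ?thesis by simp
  qed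
  show ?thesis
  proof (rule intri_I[OF al0 be0 s1])
    show "fst Pp = fst M + al * (fst B0 - fst M) + be * (fst (M + (rcross (M - B0) d / rcross (A0 - B0) d) *\<^sub>R (B0 - A0)) - fst M)"
      using gen[OF cx] unfolding l_def K1_def K2_def by simp
    show "snd Pp = snd M + al * (snd B0 - snd M) + be * (snd (M + (rcross (M - B0) d / rcross (A0 - B0) d) *\<^sub>R (B0 - A0)) - snd M)"
      using gen[OF cy] unfolding l_def K1_def K2_def by simp
  qed
qed


lemma top_pt_prop:
  assumes fin: "finite S" and ne: "S \<noteq> {}"
  shows "top_pt S \<in> S \<and> (\<forall>p\<in>S. snd p < snd (top_pt S) \<or> (snd p = snd (top_pt S) \<and> fst p \<le> fst (top_pt S)))"
proof -
  define ym where "ym = Max (snd ` S)"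
  have ymin: "ym \<in> snd ` S" unfolding ym_def using fin ne by (intro Max_in) auto
  have ymge: "\<And>p. p \<in> S \<Longrightarrow> snd p \<le> ym" unfolding ym_def using fin by simp
  define S' where "S' = {p \<in> S. snd p = ym}"
  have finS': "finite S'" using fin S'_def by simp
  have neS': "S' \<noteq> {}" using ymin S'_def by auto
  define xm where "xm = Max (fst ` S')"
  have xmin: "xm \<in> fst ` S'" unfolding xm_def using finS' neS' by (intro Max_in) auto
  have xmge: "\<And>p. p \<in> S' \<Longrightarrow> fst p \<le> xm" unfolding xm_def using finS' by simp
  have t0S: "(xm, ym) \<in> S" using xmin S'_def by (auto simp: image_iff)
  have t0: "(xm, ym) \<in> S \<and> (\<forall>p\<in>S. snd p < snd (xm, ym) \<or> (snd p = snd (xm, ym) \<and> fst p \<le> fst (xm, ym)))"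
  proof (intro conjI ballI t0S)
    fix p assume p: "p \<in> S"
    show "snd p < snd (xm, ym) \<or> (snd p = snd (xm, ym) \<and> fst p \<le> fst (xm, ym))"
    proof (cases "snd p = ym")
      case True then have "p \<in> S'" using p S'_def by simp
      then show ?thesis using xmge True by simp
    next
      case False then show ?thesis using ymge[OF p] by simp
    qed
  qed
  show ?thesis unfolding top_pt_def
  proof (rule theI2[of _ "(xm, ym)"])
    show "(xm, ym) \<in> S \<and> (\<forall>p\<in>S. snd p < snd (xm, ym) \<or> (snd p = snd (xm, ym) \<and> fst p \<le> fst (xm, ym)))" by (rule t0)
  next
    fix x assume x: "x \<in> S \<and> (\<forall>p\<in>S. snd p < snd x \<or> (snd p = snd x \<and> fst p \<le> fst x))"
    have "snd (xm, ym) < snd x \<or> (snd (xm, ym) = snd x \<and> fst (xm, ym) \<le> fst x)" using x t0S by blast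
    moreover have "snd x < snd (xm, ym) \<or> (snd x = snd (xm, ym) \<and> fst x \<le> fst (xm, ym))" using t0 x by blast
    ultimately have "snd x = ym" "fst x = xm" by auto
    then show "x = (xm, ym)" by (simp add: prod_eq_iff)
  qed
qed

lemma bot_pt_prop:
  assumes fin: "finite S" and ne: "S \<noteq> {}"
  shows "bot_pt S \<in> S \<and> (\<forall>p\<in>S. snd (bot_pt S) < snd p \<or> (snd p = snd (bot_pt S) \<and> fst (bot_pt S) \<le> fst p))"
proof -
  define ym where "ym = Min (snd ` S)"
  have ymin: "ym \<in> snd ` S" unfolding ym_def using fin ne by (intro Min_in) auto
  have ymge: "\<And>p. p \<in> S \<Longrightarrow> ym \<le> snd p" unfolding ym_def using fin by simp
  define S' where "S' = {p \<in> S. snd p = ym}"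
  have finS': "finite S'" using fin S'_def by simp
  have neS': "S' \<noteq> {}" using ymin S'_def by auto
  define xm where "xm = Min (fst ` S')"
  have xmin: "xm \<in> fst ` S'" unfolding xm_def using finS' neS' by (intro Min_in) auto
  have xmge: "\<And>p. p \<in> S' \<Longrightarrow> xm \<le> fst p" unfolding xm_def using finS' by simp
  have t0S: "(xm, ym) \<in> S" using xmin S'_def by (auto simp: image_iff)
  have t0: "(xm, ym) \<in> S \<and> (\<forall>p\<in>S. snd (xm, ym) < snd p \<or> (snd p = snd (xm, ym) \<and> fst (xm, ym) \<le> fst p))"
  proof (intro conjI ballI t0S)
    fix p assume p: "p \<in> S"
    show "snd (xm, ym) < snd p \<or> (snd p = snd (xm, ym) \<and> fst (xm, ym) \<le> fst p)"
    proof (cases "snd p = ym")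
      case True then have "p \<in> S'" using p S'_def by simp
      then show ?thesis using xmge True by simp
    next
      case False then show ?thesis using ymge[OF p] by simp
    qed
  qed
  show ?thesis unfolding bot_pt_def
  proof (rule theI2[of _ "(xm, ym)"])
    show "(xm, ym) \<in> S \<and> (\<forall>p\<in>S. snd (xm, ym) < snd p \<or> (snd p = snd (xm, ym) \<and> fst (xm, ym) \<le> fst p))" by (rule t0)
  next
    fix x assume x: "x \<in> S \<and> (\<forall>p\<in>S. snd x < snd p \<or> (snd p = snd x \<and> fst x \<le> fst p))"
    have "snd x < snd (xm, ym) \<or> (snd (xm, ym) = snd x \<and> fst x \<le> fst (xm, ym))" using x t0S by blast
    moreover have "snd (xm, ym) < snd x \<or> (snd x = snd (xm, ym) \<and> fst (xm, ym) \<le> fst x)" using t0 x by blast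
    ultimately have "snd x = ym" "fst x = xm" by auto
    then show "x = (xm, ym)" by (simp add: prod_eq_iff)
  qed
qed


definition Qs :: "edge list \<Rightarrow> nat" where
  "Qs es = sum_list (map (\<lambda>(a, b, P). card P) es)"

lemma init_edges_ok:
  fixes a b :: pt and d :: "real \<times> real"
  assumes finS: "finite S" and aS: "a \<in> S" and bS: "b \<in> S"
    and sa: "\<forall>p\<in>S. rcross (rpt p - rpt a) d \<le> 0"
    and sb: "\<forall>p\<in>S. rcross (rpt p - rpt b) (- d) \<le> 0"
    and K: "right_of a b S \<noteq> {} \<Longrightarrow> rcross (rpt b - rpt a) d < 0 \<and> rcross (rpt a - rpt b) (- d) < 0"
  shows "(\<forall>e\<in>set (qh_init_edges a b S). EI S e) \<and> length (qh_init_edges a b S) \<le> 2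
    \<and> Qs (qh_init_edges a b S) \<le> 2 * card S
    \<and> a \<in> fst ` set (qh_init_edges a b S)
    \<and> (\<forall>(a', b', P')\<in>set (qh_init_edges a b S). b' = b \<or> b' \<in> fst ` set (qh_init_edges a b S))
    \<and> (\<forall>p\<in>S. 0 < outd a b p \<longrightarrow> (\<exists>(a', b', P')\<in>set (qh_init_edges a b S). p \<in> P') \<or>
          rpt p \<in> convex hull (rpt ` insert b (fst ` set (qh_init_edges a b S))))"
proof (cases "right_of a b S = {}")
  case True
  then have e: "qh_init_edges a b S = [(a, b, {})]" unfolding qh_init_edges_def by simp
  have "\<forall>p\<in>S. \<not> 0 < outd a b p" using True unfolding right_of_def by auto
  then show ?thesis unfolding e using aS bS by (simp add: EI_def Qs_def)
next
  case False
  define l where "l = extreme_pt a b S"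
  have e: "qh_init_edges a b S = [(a, l, right_of a l S), (l, b, right_of l b S)]"
    unfolding qh_init_edges_def l_def using False by (simp add: Let_def)
  define H where "H = Max (outd a b ` S)"
  have neS: "S \<noteq> {}" using aS by auto
  have Hin: "H \<in> outd a b ` S" unfolding H_def using finS neS by (intro Max_in) auto
  have Hge: "\<And>p. p \<in> S \<Longrightarrow> outd a b p \<le> H" unfolding H_def using finS by simp
  obtain p0 where p0: "p0 \<in> S" "outd a b p0 = H" using Hin by auto
  then have "p0 \<in> farthest a b S" unfolding farthest_def H_def by simp
  then have "l \<in> farthest a b S" unfolding l_def extreme_pt_def by (rule someI)
  then have lS: "l \<in> S" and lH: "outd a b l = H" unfolding farthest_def H_def by auto
  obtain q where q: "q \<in> S" "0 < outd a b q" using False unfolding right_of_def by auto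
  have Hpos: "H > 0" using Hge[OF q(1)] q(2) by simp
  have K1: "rcross (rpt b - rpt a) d < 0" and K2: "rcross (rpt a - rpt b) (- d) < 0" using K False by auto
  have Hr: "rcross (rpt l - rpt a) (rpt b - rpt a) > 0" using rcr[of l a b] lH Hpos by simp
  have Vr: "\<And>p. p \<in> S \<Longrightarrow> rcross (rpt p - rpt a) (rpt b - rpt a) \<le> rcross (rpt l - rpt a) (rpt b - rpt a)"
    using rcr Hge lH by simp
  have EI1: "EI S (a, l, right_of a l S)"
  proof -
    define c where "c = rpt l + (rcross (rpt l - rpt a) d / rcross (rpt b - rpt a) d) *\<^sub>R (rpt a - rpt b)"
    have "\<forall>p\<in>right_of a l S. intri (rpt a) (rpt l) c (rpt p)"
    proof
      fix p assume p: "p \<in> right_of a l S"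
      then have pS: "p \<in> S" and pz: "0 < outd a l p" unfolding right_of_def by auto
      show "intri (rpt a) (rpt l) c (rpt p)" unfolding c_def
        by (rule type1_real[OF Hr Vr[OF pS] _ bspec[OF sa pS] K1 bspec[OF sa lS]]) (use rcr[of p a l] pz in simp)
    qed
    then have ex: "\<exists>c. (\<forall>p\<in>right_of a l S. intri (rpt a) (rpt l) c (rpt p)) \<and>
        (\<forall>p\<in>S. 0 < outd a l p \<and> intri (rpt a) (rpt l) c (rpt p) \<longrightarrow> p \<in> right_of a l S)"
      unfolding right_of_def by blast
    have s1: "right_of a l S \<subseteq> S" and s2: "\<forall>p\<in>right_of a l S. 0 < outd a l p"
      unfolding right_of_def by auto
    show ?thesis unfolding EI_def using aS lS s1 s2 ex by (simp only: prod.case) blast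
  qed
  have EI2: "EI S (l, b, right_of l b S)"
  proof -
    define c where "c = rpt l + (rcross (rpt l - rpt b) (- d) / rcross (rpt a - rpt b) (- d)) *\<^sub>R (rpt b - rpt a)"
    have "\<forall>p\<in>right_of l b S. intri (rpt l) (rpt b) c (rpt p)"
    proof
      fix p assume p: "p \<in> right_of l b S"
      then have pS: "p \<in> S" and pz: "0 < outd l b p" unfolding right_of_def by auto
      show "intri (rpt l) (rpt b) c (rpt p)" unfolding c_def
        by (rule type2_real[OF Hr Vr[OF pS] _ bspec[OF sb pS] K2 bspec[OF sb lS]]) (use rcr[of p l b] pz in simp)
    qed
    then have ex: "\<exists>c. (\<forall>p\<in>right_of l b S. intri (rpt l) (rpt b) c (rpt p)) \<and>
        (\<forall>p\<in>S. 0 < outd l b p \<and> intri (rpt l) (rpt b) c (rpt p) \<longrightarrow> p \<in> right_of l b S)"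
      unfolding right_of_def by blast
    have s1: "right_of l b S \<subseteq> S" and s2: "\<forall>p\<in>right_of l b S. 0 < outd l b p"
      unfolding right_of_def by auto
    show ?thesis unfolding EI_def using lS bS s1 s2 ex by (simp only: prod.case) blast
  qed
  have c1: "card (right_of a l S) \<le> card S" by (rule card_mono[OF finS]) (auto simp: right_of_def)
  have c2: "card (right_of l b S) \<le> card S" by (rule card_mono[OF finS]) (auto simp: right_of_def)
  have cov: "(\<exists>(a', b', P')\<in>set (qh_init_edges a b S). p \<in> P') \<or>
          rpt p \<in> convex hull (rpt ` insert b (fst ` set (qh_init_edges a b S)))"
    if pS: "p \<in> S" and pp: "0 < outd a b p" for p
  proof (cases "p \<in> right_of a l S \<or> p \<in> right_of l b S")
    case True then show ?thesis unfolding e by auto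
  next
    case False
    then have o1: "outd a l p \<le> 0" and o2: "outd l b p \<le> 0" using pS unfolding right_of_def by auto
    have "intri (rpt a) (rpt b) (rpt l) (rpt p)" by (rule disc_tri) (use lH Hpos pp o1 o2 in auto)
    then have "rpt p \<in> convex hull {rpt a, rpt b, rpt l}" using intri_hull by simp
    moreover have "convex hull {rpt a, rpt b, rpt l} \<subseteq> convex hull (rpt ` insert b (fst ` set (qh_init_edges a b S)))"
      by (rule hull_mono) (auto simp: e)
    ultimately show ?thesis by blast
  qed
  show ?thesis
  proof (intro conjI)
    show "\<forall>e\<in>set (qh_init_edges a b S). EI S e" unfolding e using EI1 EI2 by simp
    show "length (qh_init_edges a b S) \<le> 2" unfolding e by simp
    show "Qs (qh_init_edges a b S) \<le> 2 * card S" unfolding e Qs_def using c1 c2 by simp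
    show "a \<in> fst ` set (qh_init_edges a b S)" unfolding e by simp
    show "\<forall>(a', b', P')\<in>set (qh_init_edges a b S). b' = b \<or> b' \<in> fst ` set (qh_init_edges a b S)"
      unfolding e by auto
    show "\<forall>p\<in>S. 0 < outd a b p \<longrightarrow> (\<exists>(a', b', P')\<in>set (qh_init_edges a b S). p \<in> P') \<or>
          rpt p \<in> convex hull (rpt ` insert b (fst ` set (qh_init_edges a b S)))"
      using cov by blast
  qed
qed





definition SI :: "pt set \<Rightarrow> edge list \<Rightarrow> bool" where
  "SI S es \<longleftrightarrow> (\<forall>e\<in>set es. EI S e) \<and> (\<forall>(a, b, P)\<in>set es. b \<in> fst ` set es) \<and>
     (\<forall>p\<in>S. (\<exists>(a, b, P)\<in>set es. p \<in> P) \<or> rpt p \<in> convex hull (rpt ` fst ` set es))"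

lemma process_res: "process_edge (a, b, {}) = [(a, b, {})]"
  unfolding process_edge_def by simp

lemma edge_all:
  assumes finS: "finite S" and dc: "digital_convex S" and ei: "EI S e"
  shows "(\<forall>e'\<in>set (process_edge e). EI S e')
   \<and> (case e of (a, b, P) \<Rightarrow> (if P = {} then 0 else card P + 1)) + 7 * Qs (process_edge e) \<le> 7 * (case e of (a, b, P) \<Rightarrow> card P)
   \<and> length (process_edge e) \<le> 1 + 2 * (case e of (a, b, P) \<Rightarrow> (if P = {} then 0 else card P + 1))
   \<and> (\<forall>(a', b', P')\<in>set (process_edge e). b' = fst (snd e) \<or> b' \<in> fst ` set (process_edge e))
   \<and> fst e \<in> fst ` set (process_edge e)
   \<and> (\<forall>p\<in>snd (snd e). (\<exists>(a', b', P')\<in>set (process_edge e). p \<in> P') \<or>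
          rpt p \<in> convex hull (rpt ` insert (fst (snd e)) (fst ` set (process_edge e))))"
proof -
  obtain a b P where e: "e = (a, b, P)" by (cases e) auto
  show ?thesis
  proof (cases "P = {}")
    case True
    then show ?thesis using ei unfolding e by (simp add: process_res Qs_def)
  next
    case False
    from process_unres[OF finS dc ei[unfolded e] False] show ?thesis
      unfolding e Qs_def using False by auto
  qed
qed

lemma qh_step_Cons: "qh_step (e # es) = process_edge e @ qh_step es"
  unfolding qh_step_def by simp

lemma step_cost_Cons: "step_cost (e # es) = (case e of (a, b, P) \<Rightarrow> (if P = {} then 0 else card P + 1)) + step_cost es"
  unfolding step_cost_def by simp

lemma Qs_Cons: "Qs (e # es) = (case e of (a, b, P) \<Rightarrow> card P) + Qs es" unfolding Qs_def by simp
lemma Qs_append: "Qs (xs @ ys) = Qs xs + Qs ys" unfolding Qs_def by simp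

lemma step_num:
  assumes finS: "finite S" and dc: "digital_convex S" and ei: "\<forall>e\<in>set es. EI S e"
  shows "step_cost es + 7 * Qs (qh_step es) \<le> 7 * Qs es \<and> length (qh_step es) \<le> length es + 2 * step_cost es"
  using ei
proof (induction es)
  case Nil then show ?case by (simp add: qh_step_def step_cost_def Qs_def)
next
  case (Cons e es)
  have h: "EI S e" using Cons.prems by simp
  note E = edge_all[OF finS dc h]
  have IH: "step_cost es + 7 * Qs (qh_step es) \<le> 7 * Qs es \<and> length (qh_step es) \<le> length es + 2 * step_cost es"
    using Cons by simp
  show ?case using E IH unfolding qh_step_Cons step_cost_Cons Qs_Cons Qs_append by auto
qed

lemma starts_mono: "fst ` set es \<subseteq> fst ` set (qh_step es)"
proof
  fix x assume "x \<in> fst ` set es"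
  then obtain e where e: "e \<in> set es" "x = fst e" by auto
  have "x \<in> fst ` set (process_edge e)"
  proof -
    obtain a b P where ee: "e = (a, b, P)" by (cases e) auto
    show ?thesis unfolding ee e(2) process_edge_def by (auto simp: Let_def)
  qed
  then show "x \<in> fst ` set (qh_step es)" using e(1) unfolding qh_step_def by force
qed

lemma step_SI:
  assumes finS: "finite S" and dc: "digital_convex S" and si: "SI S es"
  shows "SI S (qh_step es)"
proof -
  have ei: "\<forall>e\<in>set es. EI S e" using si SI_def by simp
  have ends: "\<forall>(a, b, P)\<in>set es. b \<in> fst ` set es" using si SI_def by simp
  have cov: "\<forall>p\<in>S. (\<exists>(a, b, P)\<in>set es. p \<in> P) \<or> rpt p \<in> convex hull (rpt ` fst ` set es)"
    using si SI_def by simp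
  have setq: "set (qh_step es) = (\<Union>e\<in>set es. set (process_edge e))" unfolding qh_step_def by simp
  have sm: "fst ` set es \<subseteq> fst ` set (qh_step es)" by (rule starts_mono)
  have sub: "fst ` set (process_edge e) \<subseteq> fst ` set (qh_step es)" if "e \<in> set es" for e
    using that setq by auto
  have A: "\<forall>e\<in>set (qh_step es). EI S e"
    using edge_all[OF finS dc] ei setq by auto
  have B: "\<forall>(a, b, P)\<in>set (qh_step es). b \<in> fst ` set (qh_step es)"
  proof (clarify)
    fix a' b' P' assume "(a', b', P') \<in> set (qh_step es)"
    then obtain e where e: "e \<in> set es" "(a', b', P') \<in> set (process_edge e)" using setq by auto
    have "b' = fst (snd e) \<or> b' \<in> fst ` set (process_edge e)"
      using conjunct1[OF conjunct2[OF conjunct2[OF conjunct2[OF edge_all[OF finS dc bspec[OF ei e(1)]]]]]] e(2) by auto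
    moreover have "fst (snd e) \<in> fst ` set es" using ends e(1) by (cases e) auto
    ultimately show "b' \<in> fst ` set (qh_step es)" using sm sub[OF e(1)] by auto
  qed
  have C: "\<forall>p\<in>S. (\<exists>(a, b, P)\<in>set (qh_step es). p \<in> P) \<or> rpt p \<in> convex hull (rpt ` fst ` set (qh_step es))"
  proof
    fix p assume pS: "p \<in> S"
    have hm: "convex hull (rpt ` fst ` set es) \<subseteq> convex hull (rpt ` fst ` set (qh_step es))"
      by (rule hull_mono) (rule image_mono[OF sm])
    show "(\<exists>(a, b, P)\<in>set (qh_step es). p \<in> P) \<or> rpt p \<in> convex hull (rpt ` fst ` set (qh_step es))"
    proof (cases "rpt p \<in> convex hull (rpt ` fst ` set es)")
      case True then show ?thesis using hm by auto
    next
      case False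
      then obtain e where e: "e \<in> set es" "p \<in> snd (snd e)" using cov pS by fastforce
      have "(\<exists>(a', b', P')\<in>set (process_edge e). p \<in> P') \<or>
          rpt p \<in> convex hull (rpt ` insert (fst (snd e)) (fst ` set (process_edge e)))"
        using edge_all[OF finS dc bspec[OF ei e(1)]] e(2) by blast
      moreover have ins: "insert (fst (snd e)) (fst ` set (process_edge e)) \<subseteq> fst ` set (qh_step es)"
        using ends e(1) sm sub[OF e(1)] by (cases e) auto
      have "convex hull (rpt ` insert (fst (snd e)) (fst ` set (process_edge e))) \<subseteq> convex hull (rpt ` fst ` set (qh_step es))"
        by (rule hull_mono) (rule image_mono[OF ins])
      ultimately show ?thesis using setq e(1) by blast
    qed
  qed
  show ?thesis unfolding SI_def using A B C by blast
qed




lemma online_seg: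
  fixes t bt p :: pt
  assumes tb: "t \<noteq> bt" and yt: "snd p \<le> snd t" and yb: "snd bt \<le> snd p"
    and xt: "snd p = snd t \<longrightarrow> fst p \<le> fst t" and xb: "snd p = snd bt \<longrightarrow> fst bt \<le> fst p"
    and tt: "snd t = snd bt \<longrightarrow> fst bt \<le> fst t"
    and o: "outd t bt p = 0"
  shows "intri (rpt t) (rpt bt) (rpt bt) (rpt p)"
proof (cases "snd bt < snd t")
  case True
  define s where "s = (real_of_int (snd t) - real_of_int (snd p)) / (real_of_int (snd t) - real_of_int (snd bt))"
  have den: "real_of_int (snd t) - real_of_int (snd bt) > 0" using True by simp
  have s0: "0 \<le> s" unfolding s_def using yt den by simp
  have s1: "s + 0 \<le> 1" unfolding s_def using yb den by (simp add: field_simps)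
  have oo: "(real_of_int (fst p) - fst t) * (real_of_int (snd bt) - snd t) = (real_of_int (snd p) - snd t) * (real_of_int (fst bt) - fst t)"
  proof -
    have "(fst p - fst t) * (snd bt - snd t) = (snd p - snd t) * (fst bt - fst t)" using o unfolding outd_expand by simp
    from arg_cong[OF this, of real_of_int] show ?thesis by simp
  qed
  show ?thesis
  proof (rule intri_I[OF s0 _ s1])
    show "fst (rpt p) = fst (rpt t) + s * (fst (rpt bt) - fst (rpt t)) + 0 * (fst (rpt bt) - fst (rpt t))"
      using oo den unfolding s_def rpt_def by (simp add: field_simps)
    show "snd (rpt p) = snd (rpt t) + s * (snd (rpt bt) - snd (rpt t)) + 0 * (snd (rpt bt) - snd (rpt t))"
      using den unfolding s_def rpt_def by (simp add: field_simps)
  qed simp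
next
  case False
  then have eq: "snd bt = snd t" using yt yb by simp
  then have py: "snd p = snd t" using yt yb by simp
  have "fst bt \<noteq> fst t" using tb eq by (auto simp: prod_eq_iff)
  then have lt: "fst bt < fst t" using tt eq by simp
  define s where "s = (real_of_int (fst t) - real_of_int (fst p)) / (real_of_int (fst t) - real_of_int (fst bt))"
  have den: "real_of_int (fst t) - real_of_int (fst bt) > 0" using lt by simp
  have s0: "0 \<le> s" unfolding s_def using xt py den by simp
  have s1: "s + 0 \<le> 1" unfolding s_def using xb py eq den by (simp add: field_simps)
  show ?thesis
  proof (rule intri_I[OF s0 _ s1])
    show "fst (rpt p) = fst (rpt t) + s * (fst (rpt bt) - fst (rpt t)) + 0 * (fst (rpt bt) - fst (rpt t))"
      using den unfolding s_def rpt_def by (simp add: field_simps)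
    show "snd (rpt p) = snd (rpt t) + s * (snd (rpt bt) - snd (rpt t)) + 0 * (snd (rpt bt) - snd (rpt t))"
      using py eq unfolding rpt_def by simp
  qed simp
qed


lemma outd_swap: "outd b a p = - outd a b p"
  unfolding outd_expand by (simp add: algebra_simps)

lemma init_ok:
  assumes finS: "finite S" and neS: "S \<noteq> {}"
  shows "SI S (qh_init S) \<and> Qs (qh_init S) \<le> 4 * card S \<and> length (qh_init S) \<le> 4"
proof -
  define t where "t = top_pt S"
  define bt where "bt = bot_pt S"
  have T: "t \<in> S" "\<And>p. p \<in> S \<Longrightarrow> snd p < snd t \<or> (snd p = snd t \<and> fst p \<le> fst t)"
    using top_pt_prop[OF finS neS] t_def by auto
  have Bt: "bt \<in> S" "\<And>p. p \<in> S \<Longrightarrow> snd bt < snd p \<or> (snd p = snd bt \<and> fst bt \<le> fst p)"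
    using bot_pt_prop[OF finS neS] bt_def by auto
  have yt: "\<And>p. p \<in> S \<Longrightarrow> snd p \<le> snd t" using T(2) by force
  have yb: "\<And>p. p \<in> S \<Longrightarrow> snd bt \<le> snd p" using Bt(2) by force
  show ?thesis
  proof (cases "t = bt")
    case True
    have Sone: "S = {t}"
    proof
      show "S \<subseteq> {t}"
      proof
        fix p assume p: "p \<in> S"
        have "snd p = snd t" using yt[OF p] yb[OF p] True by simp
        moreover have "fst p \<le> fst t" using T(2)[OF p] calculation by simp
        moreover have "fst t \<le> fst p" using Bt(2)[OF p] True calculation by simp
        ultimately show "p \<in> {t}" by (simp add: prod_eq_iff)
      qed
      show "{t} \<subseteq> S" using T(1) by simp
    qed
    have e: "qh_init S = [(t, t, {})]" unfolding qh_init_def using True t_def bt_def by (simp add: Let_def)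
    have "rpt t \<in> convex hull (rpt ` fst ` set [(t, t, {})])" by (simp add: hull_inc)
    then show ?thesis unfolding e SI_def EI_def Qs_def using T(1) Sone by auto
  next
    case False
    have e: "qh_init S = qh_init_edges t bt S @ qh_init_edges bt t S"
      unfolding qh_init_def using False t_def bt_def by (simp add: Let_def)
    have strict: "snd bt < snd t" if ne: "right_of t bt S \<noteq> {} \<or> right_of bt t S \<noteq> {}"
    proof (rule ccontr)
      assume "\<not> snd bt < snd t"
      then have eq: "snd bt = snd t" using yb[OF T(1)] by simp
      have "outd t bt p = 0" if "p \<in> S" for p
        using yt[OF that] yb[OF that] eq unfolding outd_expand by simp
      moreover have "outd bt t p = 0" if "p \<in> S" for p
        using yt[OF that] yb[OF that] eq unfolding outd_expand by simp
      ultimately show False using ne unfolding right_of_def by auto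
    qed
    have rc1: "rcross (rpt p - rpt q) (-1, 0) = real_of_int (snd p - snd q)" for p q
      by (simp add: rcross_def rpt_def)
    have rc2: "rcross (rpt p - rpt q) (- (-1, 0)) = - real_of_int (snd p - snd q)" for p q
      by (simp add: rcross_def rpt_def)
    have rc3: "rcross (rpt p - rpt q) (1, 0) = - real_of_int (snd p - snd q)" for p q
      by (simp add: rcross_def rpt_def)
    have rc4: "rcross (rpt p - rpt q) (- (1, 0)) = real_of_int (snd p - snd q)" for p q
      by (simp add: rcross_def rpt_def)
    have sa1: "\<forall>p\<in>S. rcross (rpt p - rpt t) (-1, 0) \<le> 0" using rc1 yt by simp
    have sb1: "\<forall>p\<in>S. rcross (rpt p - rpt bt) (- (-1, 0)) \<le> 0" using rc2 yb by simp
    have K1: "rcross (rpt bt - rpt t) (-1, 0) < 0 \<and> rcross (rpt t - rpt bt) (- (-1, 0)) < 0"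
      if "right_of t bt S \<noteq> {}" using strict that rc1 rc2 by simp
    have sa2: "\<forall>p\<in>S. rcross (rpt p - rpt bt) (1, 0) \<le> 0" using rc3 yb by simp
    have sb2: "\<forall>p\<in>S. rcross (rpt p - rpt t) (- (1, 0)) \<le> 0" using rc4 yt by simp
    have K2: "rcross (rpt t - rpt bt) (1, 0) < 0 \<and> rcross (rpt bt - rpt t) (- (1, 0)) < 0"
      if "right_of bt t S \<noteq> {}" using strict that rc3 rc4 by simp
    note A1 = init_edges_ok[OF finS T(1) Bt(1) sa1 sb1 K1]
    note A2 = init_edges_ok[OF finS Bt(1) T(1) sa2 sb2 K2]
    define es1 where "es1 = qh_init_edges t bt S"
    define es2 where "es2 = qh_init_edges bt t S"
    have st: "fst ` set (qh_init S) = fst ` set es1 \<union> fst ` set es2" unfolding e es1_def es2_def by auto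
    have t1: "t \<in> fst ` set es1" and b2: "bt \<in> fst ` set es2" using A1 A2 es1_def es2_def by auto
    have EIs: "\<forall>e\<in>set (qh_init S). EI S e" unfolding e using A1 A2 by auto
    have ends: "\<forall>(a, b, P)\<in>set (qh_init S). b \<in> fst ` set (qh_init S)"
    proof (clarify)
      fix a b P assume "(a, b, P) \<in> set (qh_init S)"
      then have "(a, b, P) \<in> set es1 \<or> (a, b, P) \<in> set es2" unfolding e es1_def es2_def by auto
      then show "b \<in> fst ` set (qh_init S)"
      proof
        assume "(a, b, P) \<in> set es1"
        then have "b = bt \<or> b \<in> fst ` set es1" using A1 es1_def by fastforce
        then show ?thesis using st b2 by auto
      next
        assume "(a, b, P) \<in> set es2"
        then have "b = t \<or> b \<in> fst ` set es2" using A2 es2_def by fastforce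
        then show ?thesis using st t1 by auto
      qed
    qed
    have cov: "(\<exists>(a, b, P)\<in>set (qh_init S). p \<in> P) \<or> rpt p \<in> convex hull (rpt ` fst ` set (qh_init S))"
      if pS: "p \<in> S" for p
    proof -
      have h1: "convex hull (rpt ` insert bt (fst ` set es1)) \<subseteq> convex hull (rpt ` fst ` set (qh_init S))"
        by (rule hull_mono) (use st b2 in auto)
      have h2: "convex hull (rpt ` insert t (fst ` set es2)) \<subseteq> convex hull (rpt ` fst ` set (qh_init S))"
        by (rule hull_mono) (use st t1 in auto)
      consider "0 < outd t bt p" | "0 < outd bt t p" | "outd t bt p = 0" using outd_swap[of bt t p] by linarith
      then show ?thesis
      proof cases
        case 1
        then have "(\<exists>(a', b', P')\<in>set es1. p \<in> P') \<or> rpt p \<in> convex hull (rpt ` insert bt (fst ` set es1))"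
          using A1 pS es1_def by blast
        then show ?thesis using h1 unfolding e es1_def by auto
      next
        case 2
        then have "(\<exists>(a', b', P')\<in>set es2. p \<in> P') \<or> rpt p \<in> convex hull (rpt ` insert t (fst ` set es2))"
          using A2 pS es2_def by blast
        then show ?thesis using h2 unfolding e es2_def by auto
      next
        case 3
        have "intri (rpt t) (rpt bt) (rpt bt) (rpt p)"
          by (rule online_seg[OF False yt[OF pS] yb[OF pS] _ _ _ 3]) (use T(2)[OF pS] Bt(2)[OF pS] Bt(2)[OF T(1)] in auto)
        then have "rpt p \<in> convex hull {rpt t, rpt bt, rpt bt}" using intri_hull by simp
        moreover have "convex hull {rpt t, rpt bt, rpt bt} \<subseteq> convex hull (rpt ` fst ` set (qh_init S))"
          by (rule hull_mono) (use st t1 b2 in auto)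
        ultimately show ?thesis by blast
      qed
    qed
    have "SI S (qh_init S)" unfolding SI_def using EIs ends cov by blast
    moreover have "Qs (qh_init S) \<le> 4 * card S" unfolding e Qs_append using A1 A2 by simp
    moreover have "length (qh_init S) \<le> 4" unfolding e using A1 A2 by simp
    ultimately show ?thesis by blast
  qed
qed


lemma cost0_finished: "step_cost es = 0 \<Longrightarrow> qh_finished es"
proof (induction es)
  case Nil then show ?case by (simp add: qh_finished_def)
next
  case (Cons e es)
  obtain a b P where e: "e = (a, b, P)" by (cases e) auto
  show ?case using Cons unfolding e step_cost_Cons qh_finished_def by (auto split: if_splits)
qed

theorem theorem1:
  "\<exists>C::nat. \<forall>S :: pt set. finite S \<and> S \<noteq> {} \<and> digital_convex S \<longrightarrow>
     (\<forall>N. qh_time S N \<le> C * card S) \<and>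
     (\<forall>k. qh_space ((qh_step ^^ k) (qh_init S)) \<le> C * card S) \<and>
     (\<exists>k. qh_finished ((qh_step ^^ k) (qh_init S)) \<and>
          convex hull (rpt ` qh_vertices ((qh_step ^^ k) (qh_init S))) = convex hull (rpt ` S))"
proof (intro exI[of _ 100] allI impI)
  fix S :: "pt set"
  assume asm: "finite S \<and> S \<noteq> {} \<and> digital_convex S"
  then have finS: "finite S" and neS: "S \<noteq> {}" and dc: "digital_convex S" by auto
  define es where "es k = (qh_step ^^ k) (qh_init S)" for k
  define n where "n = card S"
  have npos: "n \<ge> 1" using finS neS n_def by (simp add: Suc_le_eq card_gt_0_iff)
  note I = init_ok[OF finS neS]
  have es0: "es 0 = qh_init S" unfolding es_def by simp
  have esS: "es (Suc k) = qh_step (es k)" for k unfolding es_def by simp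
  have SIk: "SI S (es k)" for k
    by (induction k) (use I es0 esS step_SI[OF finS dc] in auto)
  have stepk: "step_cost (es k) + 7 * Qs (es (Suc k)) \<le> 7 * Qs (es k) \<and>
      length (es (Suc k)) \<le> length (es k) + 2 * step_cost (es k)" for k
    unfolding esS using step_num[OF finS dc] SIk[of k] SI_def by blast
  have sumN: "(\<Sum>k<N. step_cost (es k)) + 7 * Qs (es N) \<le> 7 * Qs (es 0)" for N
  proof (induction N)
    case 0 then show ?case by simp
  next
    case (Suc N) then show ?case using stepk[of N] by simp
  qed
  have lenN: "length (es N) \<le> length (es 0) + 2 * (\<Sum>k<N. step_cost (es k))" for N
  proof (induction N)
    case 0 then show ?case by simp
  next
    case (Suc N) then show ?case using stepk[of N] by simp
  qed
  have Q0: "Qs (es 0) \<le> 4 * n" using I es0 n_def by simp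
  have L0: "length (es 0) \<le> 4" using I es0 by simp
  have time: "qh_time S N \<le> 100 * card S" for N
  proof -
    have "qh_time S N = n + (\<Sum>k<N. step_cost (es k))" unfolding qh_time_def es_def n_def by simp
    also have "\<dots> \<le> n + 28 * n" using sumN[of N] Q0 by linarith
    finally show ?thesis using n_def by simp
  qed
  have space: "qh_space (es k) \<le> 100 * card S" for k
  proof -
    have "qh_space (es k) = length (es k) + Qs (es k)" unfolding qh_space_def Qs_def by simp
    also have "\<dots> \<le> 4 + 2 * (28 * n) + 4 * n" using lenN[of k] sumN[of k] L0 Q0 by linarith
    also have "\<dots> \<le> 100 * n" using npos by linarith
    finally show ?thesis using n_def by simp
  qed
  have "\<exists>k. step_cost (es k) = 0"
  proof (rule ccontr)
    assume "\<not> (\<exists>k. step_cost (es k) = 0)"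
    then have "\<forall>k. step_cost (es k) \<ge> 1" by (simp add: Suc_le_eq)
    then have "(\<Sum>k<7 * Qs (es 0) + 1. step_cost (es k)) \<ge> (\<Sum>k<7 * Qs (es 0) + 1. 1)"
      by (intro sum_mono) auto
    then show False using sumN[of "7 * Qs (es 0) + 1"] by simp
  qed
  then obtain k where k: "step_cost (es k) = 0" by blast
  have fin: "qh_finished (es k)" by (rule cost0_finished[OF k])
  have si: "SI S (es k)" by (rule SIk)
  have allin: "\<forall>p\<in>S. rpt p \<in> convex hull (rpt ` fst ` set (es k))"
  proof
    fix p assume "p \<in> S"
    then have "(\<exists>(a, b, P)\<in>set (es k). p \<in> P) \<or> rpt p \<in> convex hull (rpt ` fst ` set (es k))"
      using si SI_def by blast
    moreover have "\<not> (\<exists>(a, b, P)\<in>set (es k). p \<in> P)" using fin unfolding qh_finished_def by auto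
    ultimately show "rpt p \<in> convex hull (rpt ` fst ` set (es k))" by blast
  qed
  have stS: "fst ` set (es k) \<subseteq> S"
  proof
    fix x assume "x \<in> fst ` set (es k)"
    then obtain e where e: "e \<in> set (es k)" "x = fst e" by auto
    have "EI S e" using si e(1) SI_def by blast
    then show "x \<in> S" using e(2) unfolding EI_def by (cases e) auto
  qed
  have hulleq: "convex hull (rpt ` qh_vertices (es k)) = convex hull (rpt ` S)"
  proof
    show "convex hull (rpt ` qh_vertices (es k)) \<subseteq> convex hull (rpt ` S)"
      unfolding qh_vertices_def by (rule hull_mono) (rule image_mono[OF stS])
    show "convex hull (rpt ` S) \<subseteq> convex hull (rpt ` qh_vertices (es k))"
      unfolding qh_vertices_def by (rule hull_minimal) (use allin in \<open>auto simp: convex_convex_hull\<close>)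
  qed
  show "(\<forall>N. qh_time S N \<le> 100 * card S) \<and>
     (\<forall>k. qh_space ((qh_step ^^ k) (qh_init S)) \<le> 100 * card S) \<and>
     (\<exists>k. qh_finished ((qh_step ^^ k) (qh_init S)) \<and>
          convex hull (rpt ` qh_vertices ((qh_step ^^ k) (qh_init S))) = convex hull (rpt ` S))"
    using time space fin hulleq unfolding es_def by blast
qed

end
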